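(* Let $\Phi$ be a random formula drawn from the weighted geometric model on $\mathbb T^d$ equipped with a $\mathfrak p$-norm, with temperature $0<T<1$, and with $\max_{v}w_v/W\in o(1)$. Then each clause $c$ of $\Phi$ is nice with probability $\Omega(1)$ (bounded below by a positive constant for all sufficiently large $n$). Consequently the expected number of nice clauses of $\Phi$ is $\Theta(m)$.
   Context: $\mathbb T^d$ is $[0,1]^d$ with opposite faces identified ($d$ a fixed constant), with distance $\mathrm{dist}(p,q)=\left(\sum_{i=1}^d|p_i-q_i|_\circ^{\mathfrak p}\right)^{1/\mathfrak p}$ (and $\max_i|p_i-q_i|_\circ$ for $\mathfrak p=\infty$), where $|a-b|_\circ=\min\{|a-b|,1-|a-b|\}$ and $\mathfrak p\in\mathbb N^+\cup\{\infty\}$ is fixed. Weighted geometric $k$-SAT model ($k$ constant): $n$ variables with weights $w_v\ge1$, minimum $1$, total $W=\sum_v w_v$, and $m$ clauses; all get independent uniformly random positions in $\mathbb T^d$. Connection weight $X(c,v)=\left(w_v/\mathrm{dist}(c,v)^d\right)^{1/T}$. Each clause draws $k$ variables one after another without repetition, each draw among the remaining variables with probability proportional to $X(c,v)$; signs are chosen among the $2^k$ patterns (details irrelevant here). A clause $c$ is nice if, for each $j\in[k]$, the $j$-th variable drawn for $c$ is the variable with the $j$-th highest connection weight with $c$. *)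

theory Defs
  imports "HOL-Probability.Probability" "HOL-Library.Extended_Nat"
begin

text \<open>Points of the torus T^d are represented as functions nat => real, of which
  only the coordinates 0..d-1 matter; each coordinate is uniform on [0,1].\<close>

definition torus :: "nat \<Rightarrow> (nat \<Rightarrow> real) measure" where
  "torus d = PiM {..<d} (\<lambda>_. uniform_measure lborel {0..1::real})"

definition circ_dist :: "real \<Rightarrow> real \<Rightarrow> real" where
  "circ_dist a b = min \<bar>a - b\<bar> (1 - \<bar>a - b\<bar>)"

definition torus_dist :: "nat \<Rightarrow> enat \<Rightarrow> (nat \<Rightarrow> real) \<Rightarrow> (nat \<Rightarrow> real) \<Rightarrow> real" where
  "torus_dist d p x y =
     (case p of
        enat q \<Rightarrow> (\<Sum>i<d. circ_dist (x i) (y i) ^ q) powr (1 / real q)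
      | \<infinity> \<Rightarrow> Max (insert 0 {circ_dist (x i) (y i) | i. i < d}))"

definition conn_weight ::
  "nat \<Rightarrow> enat \<Rightarrow> real \<Rightarrow> real \<Rightarrow> (nat \<Rightarrow> real) \<Rightarrow> (nat \<Rightarrow> real) \<Rightarrow> real" where
  "conn_weight d p T wv c xv = (wv / torus_dist d p c xv ^ d) powr (1 / T)"

text \<open>Probability that the sequential weighted draw without repetition from S
  (each draw proportional to X among the remaining elements) produces exactly
  the sequence us.\<close>
fun seq_prob :: "(nat \<Rightarrow> real) \<Rightarrow> nat set \<Rightarrow> nat list \<Rightarrow> real" where
  "seq_prob X S [] = 1"
| "seq_prob X S (u # us) =
     (if u \<in> S then X u / (\<Sum>v\<in>S. X v) * seq_prob X (S - {u}) us else 0)"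

text \<open>A drawn sequence us is nice if, for each j, its j-th entry is the variable
  with the j-th highest connection weight, i.e. it has strictly larger weight
  than every variable not among the first j drawn.\<close>
definition nice_seq :: "(nat \<Rightarrow> real) \<Rightarrow> nat set \<Rightarrow> nat list \<Rightarrow> bool" where
  "nice_seq X S us \<longleftrightarrow>
     (\<forall>j < length us. \<forall>v \<in> S - set (take (Suc j) us). X v < X (us ! j))"

definition nice_prob_given ::
  "nat \<Rightarrow> enat \<Rightarrow> real \<Rightarrow> nat \<Rightarrow> nat \<Rightarrow> (nat \<Rightarrow> real) \<Rightarrow> (nat \<Rightarrow> nat \<Rightarrow> real)
     \<Rightarrow> (nat \<Rightarrow> real) \<Rightarrow> real" where
  "nice_prob_given d p T k n w xs c =
     (let X = (\<lambda>v. conn_weight d p T (w v) c (xs v)) in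
      \<Sum>us \<in> {us. distinct us \<and> length us = k \<and> set us \<subseteq> {..<n} \<and> nice_seq X {..<n} us}.
        seq_prob X {..<n} us)"

definition clause_nice_prob ::
  "nat \<Rightarrow> enat \<Rightarrow> real \<Rightarrow> nat \<Rightarrow> nat \<Rightarrow> (nat \<Rightarrow> real) \<Rightarrow> real" where
  "clause_nice_prob d p T k n w =
     (\<integral>z. nice_prob_given d p T k n w (snd z) (fst z)
        \<partial>(torus d \<Otimes>\<^sub>M PiM {..<n} (\<lambda>_. torus d)))"

definition expected_nice ::
  "nat \<Rightarrow> enat \<Rightarrow> real \<Rightarrow> nat \<Rightarrow> nat \<Rightarrow> nat \<Rightarrow> (nat \<Rightarrow> real) \<Rightarrow> real" where
  "expected_nice d p T k n m w =
     (\<integral>z. (\<Sum>j<m. nice_prob_given d p T k n w (snd z) (fst z j))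
        \<partial>(PiM {..<m} (\<lambda>_. torus d) \<Otimes>\<^sub>M PiM {..<n} (\<lambda>_. torus d)))"

end

theory Submission
  imports Defs
begin


definition Ls :: "nat \<Rightarrow> nat set \<Rightarrow> nat list set" where
  "Ls k S = {us. distinct us \<and> length us = k \<and> set us \<subseteq> S}"

lemma finite_Ls: "finite S \<Longrightarrow> finite (Ls k S)"
proof -
  assume "finite S"
  have "Ls k S \<subseteq> {xs. set xs \<subseteq> S \<and> length xs = k}" by (auto simp: Ls_def)
  thus ?thesis using finite_lists_length_eq[OF \<open>finite S\<close>] finite_subset by blast
qed

lemma Ls_Suc_cons: "Ls (Suc k) S = (\<lambda>(u,us). u # us) ` Sigma S (\<lambda>u. Ls k (S - {u}))"
proof (intro set_eqI iffI)
  fix xs assume "xs \<in> Ls (Suc k) S"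
  then obtain u us where "xs = u # us" "u \<in> S" "us \<in> Ls k (S - {u})"
    by (cases xs) (auto simp: Ls_def)
  thus "xs \<in> (\<lambda>(u,us). u # us) ` Sigma S (\<lambda>u. Ls k (S - {u}))" by force
qed (auto simp: Ls_def)

lemma Ls_Suc_snoc: "Ls (Suc k) S = (\<lambda>(us,v). us @ [v]) ` Sigma (Ls k S) (\<lambda>us. S - set us)"
proof (intro set_eqI iffI)
  fix xs assume a: "xs \<in> Ls (Suc k) S"
  then have "xs \<noteq> []" by (auto simp: Ls_def)
  then obtain us v where "xs = us @ [v]" by (metis rev_exhaust)
  with a show "xs \<in> (\<lambda>(us,v). us @ [v]) ` Sigma (Ls k S) (\<lambda>us. S - set us)"
    by (force simp: Ls_def)
qed (auto simp: Ls_def)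

lemma seq_prob_nonneg: "(\<And>v. v \<in> S \<Longrightarrow> X v \<ge> 0) \<Longrightarrow> seq_prob X S us \<ge> 0"
proof (induction us arbitrary: S)
  case Nil then show ?case by simp
next
  case (Cons u us)
  have "seq_prob X (S - {u}) us \<ge> 0" using Cons.prems by (intro Cons.IH) auto
  moreover have "(\<Sum>v\<in>S. X v) \<ge> 0" using Cons.prems by (simp add: sum_nonneg)
  ultimately show ?case using Cons.prems by auto
qed

lemma seq_prob_sum_le1:
  assumes "finite S" "\<And>v. v \<in> S \<Longrightarrow> X v \<ge> 0"
  shows "(\<Sum>us\<in>Ls k S. seq_prob X S us) \<le> 1"
  using assms
proof (induction k arbitrary: S)
  case 0
  have "Ls 0 S = {[]}" by (auto simp: Ls_def)
  then show ?case by simp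
next
  case (Suc k)
  have inj: "inj_on (\<lambda>(u,us). u # us) (Sigma S (\<lambda>u. Ls k (S - {u})))"
    by (auto simp: inj_on_def)
  have "(\<Sum>us\<in>Ls (Suc k) S. seq_prob X S us)
      = (\<Sum>(u,us)\<in>Sigma S (\<lambda>u. Ls k (S - {u})). seq_prob X S (u # us))"
    unfolding Ls_Suc_cons by (subst sum.reindex[OF inj]) (simp add: case_prod_unfold)
  also have "\<dots> = (\<Sum>u\<in>S. \<Sum>us\<in>Ls k (S - {u}). seq_prob X S (u # us))"
    using Suc.prems by (subst sum.Sigma[symmetric]) (auto intro: finite_Ls)
  also have "\<dots> = (\<Sum>u\<in>S. X u / (\<Sum>v\<in>S. X v) * (\<Sum>us\<in>Ls k (S - {u}). seq_prob X (S - {u}) us))"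
    by (simp add: sum_distrib_left)
  also have "\<dots> \<le> (\<Sum>u\<in>S. X u / (\<Sum>v\<in>S. X v) * 1)"
  proof (rule sum_mono)
    fix u assume "u \<in> S"
    have "(\<Sum>us\<in>Ls k (S - {u}). seq_prob X (S - {u}) us) \<le> 1"
      using Suc.prems by (intro Suc.IH) auto
    moreover have "X u / (\<Sum>v\<in>S. X v) \<ge> 0" using Suc.prems \<open>u\<in>S\<close> by (simp add: sum_nonneg)
    ultimately show "X u / (\<Sum>v\<in>S. X v) * (\<Sum>us\<in>Ls k (S - {u}). seq_prob X (S - {u}) us)
       \<le> X u / (\<Sum>v\<in>S. X v) * 1" by (intro mult_left_mono)
  qed
  also have "\<dots> = (\<Sum>u\<in>S. X u) / (\<Sum>v\<in>S. X v)" by (simp only: mult_1_right sum_divide_distrib)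
  also have "\<dots> \<le> 1" by (cases "(\<Sum>v\<in>S. X v) = 0") (simp_all only: div_0 divide_self_if order_refl zero_le_one if_True if_False, simp)
  finally show ?case .
qed

lemma nice_prob_given_eq:
  "nice_prob_given d p T k n w xs c =
    (\<Sum>us\<in>Ls k {..<n}. if nice_seq (\<lambda>v. conn_weight d p T (w v) c (xs v)) {..<n} us
        then seq_prob (\<lambda>v. conn_weight d p T (w v) c (xs v)) {..<n} us else 0)"
  unfolding nice_prob_given_def Let_def Ls_def
  by (subst sum.inter_filter[symmetric]) (auto intro: finite_Ls[unfolded Ls_def] intro!: sum.cong)

lemma conn_weight_nonneg: "conn_weight d p T wv c x \<ge> 0"
  by (simp add: conn_weight_def)

lemma nice_prob_given_bounds:
  "0 \<le> nice_prob_given d p T k n w xs c \<and> nice_prob_given d p T k n w xs c \<le> 1"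
proof -
  let ?X = "\<lambda>v. conn_weight d p T (w v) c (xs v)"
  have nn: "\<And>us. seq_prob ?X {..<n} us \<ge> 0" by (rule seq_prob_nonneg) (simp add: conn_weight_nonneg)
  have "nice_prob_given d p T k n w xs c \<le> (\<Sum>us\<in>Ls k {..<n}. seq_prob ?X {..<n} us)"
    unfolding nice_prob_given_eq by (rule sum_mono) (use nn in auto)
  also have "\<dots> \<le> 1" by (rule seq_prob_sum_le1) (auto simp: conn_weight_nonneg)
  finally show ?thesis unfolding nice_prob_given_eq using nn by (auto intro: sum_nonneg)
qed

lemma seq_prob_lower:
  assumes "distinct us" "set us \<subseteq> S" "finite S" "\<And>v. v \<in> S \<Longrightarrow> X v \<ge> 0" "\<theta> \<ge> 0"
    and "\<And>j. j < length us \<Longrightarrow> X (us ! j) > 0"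
    and "\<And>j. j < length us \<Longrightarrow> X (us ! j) \<ge> \<theta> * (\<Sum>v\<in>S - set (take j us). X v)"
  shows "seq_prob X S us \<ge> \<theta> ^ length us"
  using assms
proof (induction us arbitrary: S)
  case Nil then show ?case by simp
next
  case (Cons u us)
  have uS: "u \<in> S" using Cons.prems by auto
  have Xu: "X u > 0" using Cons.prems(6)[of 0] by simp
  have h: "X u \<ge> \<theta> * (\<Sum>v\<in>S. X v)" using Cons.prems(7)[of 0] by simp
  have sp: "(\<Sum>v\<in>S. X v) > 0"
    using Xu member_le_sum[of u S X] uS Cons.prems(3,4) by fastforce
  have q: "X u / (\<Sum>v\<in>S. X v) \<ge> \<theta>" using h sp by (simp add: field_simps)
  have IH: "seq_prob X (S - {u}) us \<ge> \<theta> ^ length us"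
  proof (rule Cons.IH)
    fix j assume j: "j < length us"
    have "(S - {u}) - set (take j us) = S - set (take (Suc j) (u # us))" by auto
    then show "\<theta> * (\<Sum>v\<in>S - {u} - set (take j us). X v) \<le> X (us ! j)"
      using Cons.prems(7)[of "Suc j"] j by simp
  next
    fix j assume j: "j < length us" then show "X (us ! j) > 0" using Cons.prems(6)[of "Suc j"] by simp
  qed (use Cons.prems in auto)
  have "\<theta> ^ length (u # us) = \<theta> * \<theta> ^ length us" by simp
  also have "\<dots> \<le> X u / (\<Sum>v\<in>S. X v) * seq_prob X (S - {u}) us"
    by (rule mult_mono[OF q IH]) (use Cons.prems sp uS in \<open>auto simp: zero_le_power\<close>)
  finally show ?case using uS by simp
qed


lemma det_nice:
  assumes S: "finite S" and Xnn: "\<And>v. v \<in> S \<Longrightarrow> X v \<ge> 0" and us: "us \<in> Ls k S"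
    and M: "M \<ge> 0"
    and tmono: "\<And>i j. i \<le> j \<Longrightarrow> j \<le> k \<Longrightarrow> \<tau> j \<le> \<tau> i" and tk: "\<tau> k \<ge> 0"
    and top: "\<And>j. j < k \<Longrightarrow> \<tau> (Suc j) < X (us ! j)"
    and band: "\<And>j. j < k \<Longrightarrow> 0 < j \<Longrightarrow> X (us ! j) \<le> \<tau> j"
    and rest: "\<And>v. v \<in> S - set us \<Longrightarrow> X v \<le> \<tau> k"
    and restsum: "(\<Sum>v\<in>S - set us. X v) \<le> M * \<tau> k"
  shows "nice_seq X S us \<and> seq_prob X S us \<ge> (1 / (1 + real k + M)) ^ k"
proof -
  have dist: "distinct us" and len: "length us = k" and sub: "set us \<subseteq> S"
    using us by (auto simp: Ls_def)
  have A: "X v \<le> \<tau> (Suc j)" if j: "j < k" and v: "v \<in> S - set (take (Suc j) us)" for j v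
  proof (cases "v \<in> set us")
    case True
    then obtain i where i: "i < k" "us ! i = v" using len by (auto simp: in_set_conv_nth)
    have "\<not> i \<le> j"
    proof
      assume "i \<le> j"
      then have "us ! i \<in> set (take (Suc j) us)" using i len
        by (metis in_set_conv_nth length_take min_less_iff_conj nth_take less_Suc_eq_le)
      with v i show False by auto
    qed
    then have "X v \<le> \<tau> i" using band[of i] i by auto
    also have "\<dots> \<le> \<tau> (Suc j)" using tmono \<open>\<not> i \<le> j\<close> i by auto
    finally show ?thesis .
  next
    case False
    then have "X v \<le> \<tau> k" using rest v by auto
    also have "\<dots> \<le> \<tau> (Suc j)" using tmono j by auto
    finally show ?thesis .
  qed
  have nice: "nice_seq X S us"
    unfolding nice_seq_def using A top len by (meson order_le_less_trans)
  define \<theta> where "\<theta> = 1 / (1 + real k + M)"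
  have th: "\<theta> \<ge> 0" using M by (simp add: \<theta>_def)
  have sp: "seq_prob X S us \<ge> \<theta> ^ length us"
  proof (rule seq_prob_lower[OF dist sub S Xnn th])
    fix j assume j: "j < length us"
    then have jk: "j < k" using len by simp
    show "X (us ! j) > 0" using top[OF jk] tmono[of "Suc j" k] jk tk by linarith
  next
    fix j assume j: "j < length us"
    then have jk: "j < k" using len by simp
    have usj: "us ! j \<in> S" using j sub by auto
    have nt: "us ! j \<notin> set (take j us)"
      using distinct_take[OF dist, of "Suc j"] take_Suc_conv_app_nth[OF j] by simp
    have e1: "S - set (take j us) = insert (us ! j) (S - set (take (Suc j) us))"
      using usj nt j by (auto simp: take_Suc_conv_app_nth[OF j])
    have s1: "(\<Sum>v\<in>S - set (take j us). X v) = X (us ! j) + (\<Sum>v\<in>S - set (take (Suc j) us). X v)"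
      unfolding e1 using S by (subst sum.insert) (auto simp: take_Suc_conv_app_nth[OF j])
    have e2: "S - set (take (Suc j) us) = (set us - set (take (Suc j) us)) \<union> (S - set us)"
      using sub set_take_subset[of "Suc j" us] by auto
    have q1: "(\<Sum>v\<in>S - set (take (Suc j) us). X v)
        = (\<Sum>v\<in>set us - set (take (Suc j) us). X v) + (\<Sum>v\<in>S - set us. X v)"
      unfolding e2 using S sub by (subst sum.union_disjoint) (auto intro: finite_subset)
    have q2: "(\<Sum>v\<in>set us - set (take (Suc j) us). X v) \<le> real (card (set us - set (take (Suc j) us))) * \<tau> (Suc j)"
      by (rule sum_bounded_above) (use A jk sub in auto)
    have q3: "real (card (set us - set (take (Suc j) us))) \<le> real k"
      using card_mono[of "set us" "set us - set (take (Suc j) us)"] len card_length[of us] by simp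
    have tS: "\<tau> (Suc j) \<ge> 0" using tmono[of "Suc j" k] jk tk by simp
    have q4: "M * \<tau> k \<le> M * \<tau> (Suc j)" using tmono[of "Suc j" k] jk M by (intro mult_left_mono) auto
    have q5: "real (card (set us - set (take (Suc j) us))) * \<tau> (Suc j) \<le> real k * \<tau> (Suc j)"
      using q3 tS by (rule mult_right_mono)
    have "(\<Sum>v\<in>S - set (take (Suc j) us). X v) \<le> real k * \<tau> (Suc j) + M * \<tau> (Suc j)"
      using q1 q2 q4 q5 restsum by linarith
    have "\<tau> (Suc j) \<le> X (us ! j)" using top[OF jk] by simp
    then have "(real k + M) * \<tau> (Suc j) \<le> (real k + M) * X (us ! j)"
      using M by (intro mult_left_mono) auto
    with s1 \<open>(\<Sum>v\<in>S - set (take (Suc j) us). X v) \<le> real k * \<tau> (Suc j) + M * \<tau> (Suc j)\<close>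
    have "(\<Sum>v\<in>S - set (take j us). X v) \<le> (1 + real k + M) * X (us ! j)"
      by (simp add: algebra_simps)
    then show "\<theta> * (\<Sum>v\<in>S - set (take j us). X v) \<le> X (us ! j)"
      using M unfolding \<theta>_def by (simp add: field_simps)
  qed
  show ?thesis using nice sp len by (simp add: \<theta>_def)
qed


lemma prod_one_minus_ge:
  fixes q :: "'a \<Rightarrow> real"
  assumes "finite A" "\<And>u. u \<in> A \<Longrightarrow> 0 \<le> q u \<and> q u \<le> 1"
  shows "(\<Prod>u\<in>A. 1 - q u) \<ge> 1 - (\<Sum>u\<in>A. q u)"
  using assms
proof (induction A rule: finite_induct)
  case empty then show ?case by simp
next
  case (insert x F)
  have IH: "(\<Prod>u\<in>F. 1 - q u) \<ge> 1 - (\<Sum>u\<in>F. q u)" using insert by auto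
  have qx: "0 \<le> q x" "q x \<le> 1" using insert.prems by auto
  have sF: "(\<Sum>u\<in>F. q u) \<ge> 0" using insert.prems by (auto intro: sum_nonneg)
  have "(1 - q x) * (1 - (\<Sum>u\<in>F. q u)) \<le> (1 - q x) * (\<Prod>u\<in>F. 1 - q u)"
    using IH qx by (intro mult_left_mono) auto
  moreover have "1 - (q x + (\<Sum>u\<in>F. q u)) \<le> (1 - q x) * (1 - (\<Sum>u\<in>F. q u))"
    using qx sF by (simp add: algebra_simps)
  ultimately show ?case using insert by simp
qed

lemma Ls_prod_lower:
  fixes f :: "nat \<Rightarrow> nat \<Rightarrow> real"
  assumes S: "finite S" and fnn: "\<And>j v. f j v \<ge> 0" and fe: "\<And>j v. v \<in> S \<Longrightarrow> f j v \<le> \<epsilon>"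
    and e: "\<epsilon> \<ge> 0"
    and P: "\<And>j. j < k \<Longrightarrow> Pj j \<le> (\<Sum>v\<in>S. f j v)"
    and Pp: "\<And>j. j < k \<Longrightarrow> Pj j - real j * \<epsilon> \<ge> 0"
  shows "(\<Sum>l\<in>Ls k S. \<Prod>j<k. f j (l ! j)) \<ge> (\<Prod>j<k. Pj j - real j * \<epsilon>)"
  using P Pp
proof (induction k)
  case 0
  have "Ls 0 S = {[]}" by (auto simp: Ls_def)
  then show ?case by simp
next
  case (Suc k)
  have inj: "inj_on (\<lambda>(us,v). us @ [v]) (Sigma (Ls k S) (\<lambda>us. S - set us))"
    by (auto simp: inj_on_def)
  have pr: "(\<Prod>j<Suc k. f j ((l @ [v]) ! j)) = (\<Prod>j<k. f j (l ! j)) * f k v" if "l \<in> Ls k S" for l v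
    using that by (auto simp: Ls_def nth_append intro!: prod.cong)
  have "(\<Sum>l\<in>Ls (Suc k) S. \<Prod>j<Suc k. f j (l ! j))
      = (\<Sum>(l,v)\<in>Sigma (Ls k S) (\<lambda>us. S - set us). \<Prod>j<Suc k. f j ((l @ [v]) ! j))"
    unfolding Ls_Suc_snoc by (subst sum.reindex[OF inj]) (simp add: case_prod_unfold)
  also have "\<dots> = (\<Sum>l\<in>Ls k S. \<Sum>v\<in>S - set l. \<Prod>j<Suc k. f j ((l @ [v]) ! j))"
    using S by (subst sum.Sigma[symmetric]) (auto intro: finite_Ls)
  also have "\<dots> = (\<Sum>l\<in>Ls k S. (\<Prod>j<k. f j (l ! j)) * (\<Sum>v\<in>S - set l. f k v))"
    by (intro sum.cong refl) (simp only: pr sum_distrib_left)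
  also have "\<dots> \<ge> (\<Sum>l\<in>Ls k S. (\<Prod>j<k. f j (l ! j)) * (Pj k - real k * \<epsilon>))"
  proof (intro sum_mono mult_left_mono)
    fix l assume l: "l \<in> Ls k S"
    show "0 \<le> (\<Prod>j<k. f j (l ! j))" using fnn by (intro prod_nonneg) auto
    have sl: "set l \<subseteq> S" and cl: "card (set l) \<le> k" using l
      by (auto simp: Ls_def card_length[of l, unfolded] intro: order_trans[OF card_length])
    have "(\<Sum>v\<in>S - set l. f k v) = (\<Sum>v\<in>S. f k v) - (\<Sum>v\<in>set l. f k v)"
      using sum_diff[OF S sl] by simp
    moreover have "(\<Sum>v\<in>set l. f k v) \<le> real (card (set l)) * \<epsilon>"
      by (rule sum_bounded_above) (use fe sl in auto)
    moreover have "real (card (set l)) * \<epsilon> \<le> real k * \<epsilon>" using cl e by (intro mult_right_mono) auto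
    ultimately show "Pj k - real k * \<epsilon> \<le> (\<Sum>v\<in>S - set l. f k v)" using Suc.prems(1)[of k] by linarith
  qed
  also have "(\<Sum>l\<in>Ls k S. (\<Prod>j<k. f j (l ! j)) * (Pj k - real k * \<epsilon>))
     = (\<Sum>l\<in>Ls k S. (\<Prod>j<k. f j (l ! j))) * (Pj k - real k * \<epsilon>)"
    by (simp add: sum_distrib_right)
  also have "\<dots> \<ge> (\<Prod>j<k. Pj j - real j * \<epsilon>) * (Pj k - real k * \<epsilon>)"
    using Suc by (intro mult_right_mono) auto
  finally show ?case by simp
qed


lemma dyadic_bound:
  fixes y \<sigma> \<alpha> :: real
  assumes "0 \<le> y" "y \<le> \<sigma>" "\<alpha> > 0"
  shows "y powr \<alpha> \<le> (\<Sum>i<N. \<sigma> powr \<alpha> * ((1/2) powr \<alpha>) ^ i * (if y > \<sigma> / 2 ^ Suc i then 1 else 0))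
            + \<sigma> powr \<alpha> * ((1/2) powr \<alpha>) ^ N"
  using assms(1,2)
proof (induction N arbitrary: \<sigma>)
  case 0 then show ?case using assms by (simp add: powr_mono2)
next
  case (Suc N)
  let ?g = "\<lambda>\<sigma> i. \<sigma> powr \<alpha> * ((1/2) powr \<alpha>) ^ i * (if y > \<sigma> / 2 ^ Suc i then 1 else (0::real))"
  have s0: "0 \<le> \<sigma>" using Suc.prems by simp
  have gnn: "\<And>\<sigma> i. 0 \<le> \<sigma> \<Longrightarrow> ?g \<sigma> i \<ge> 0" by simp
  show ?case
  proof (cases "y > \<sigma> / 2")
    case True
    have "y powr \<alpha> \<le> \<sigma> powr \<alpha>" using Suc.prems assms by (simp add: powr_mono2)
    also have "\<sigma> powr \<alpha> = ?g \<sigma> 0" using True by simp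
    also have "?g \<sigma> 0 \<le> (\<Sum>i<Suc N. ?g \<sigma> i)"
      by (rule member_le_sum) (use s0 in auto)
    finally show ?thesis by (smt (verit) powr_ge_zero zero_le_power mult_nonneg_nonneg)
  next
    case False
    have IH: "y powr \<alpha> \<le> (\<Sum>i<N. ?g (\<sigma>/2) i) + (\<sigma>/2) powr \<alpha> * ((1/2) powr \<alpha>) ^ N"
      using Suc.IH[of "\<sigma>/2"] False Suc.prems by simp
    have h: "(\<sigma>/2) powr \<alpha> = \<sigma> powr \<alpha> * (1/2) powr \<alpha>" using s0 by (simp add: powr_divide)
    have "(\<Sum>i<N. ?g (\<sigma>/2) i) = (\<Sum>i<N. ?g \<sigma> (Suc i))"
      by (intro sum.cong refl) (simp add: h field_simps)
    also have "\<dots> = (\<Sum>i<Suc N. ?g \<sigma> i)"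
      by (subst sum.lessThan_Suc_shift) (use False in simp)
    finally show ?thesis using IH h by (simp add: mult.assoc)
  qed
qed


abbreviation "UU \<equiv> uniform_measure lborel {0..1::real}"

lemma prob_UU: "prob_space UU"
  by (rule prob_space_uniform_measure) auto

lemma prob_torus: "prob_space (torus d)"
  unfolding torus_def by (rule prob_space_PiM) (rule prob_UU)

lemma sets_UU[simp]: "sets UU = sets borel" by simp
lemma space_UU[simp]: "space UU = UNIV" by simp

lemma emeasure_UU: "A \<in> sets borel \<Longrightarrow> emeasure UU A = emeasure lborel ({0..1} \<inter> A)"
  by (subst emeasure_uniform_measure) (auto simp: divide_ennreal_def)

lemma emeasure_PiM_PiE_prob:
  assumes "\<And>i. i \<in> I \<Longrightarrow> prob_space (M i)" "finite I" "\<And>i. i \<in> I \<Longrightarrow> A i \<in> sets (M i)"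
  shows "emeasure (PiM I M) (PiE I A) = (\<Prod>i\<in>I. emeasure (M i) (A i))"
proof -
  have "prod_emb I M I (PiE I A) = PiE I A"
    using assms(3) sets.sets_into_space by (intro prod_emb_PiE_same_index) auto
  then show ?thesis using emeasure_PiM_emb[of I M I A] assms by simp
qed

lemma space_torus: "space (torus d) = PiE {..<d} (\<lambda>_. UNIV)"
  unfolding torus_def by (simp add: space_PiM)

lemma insert0_image: fixes d :: nat shows "insert 0 {g i |i. i < d} = (\<lambda>i. if i < d then g i else (0::real)) ` {..d}"
proof (intro set_eqI iffI)
  fix x assume "x \<in> insert 0 {g i |i. i < d}"
  then show "x \<in> (\<lambda>i. if i < d then g i else 0) ` {..d}"
  proof
    assume "x = 0" then show ?thesis by (intro rev_image_eqI[of d]) (auto simp: atMost_iff)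
  next
    assume "x \<in> {g i |i. i < d}"
    then obtain i where "i < d" "x = g i" by auto
    then show ?thesis by (intro rev_image_eqI[of i]) auto
  qed
qed auto

lemma torus_dist_measurable[measurable]:
  assumes f: "\<And>i. (\<lambda>x. f x i) \<in> borel_measurable M" and g: "\<And>i. (\<lambda>x. g x i) \<in> borel_measurable M"
  shows "(\<lambda>x. torus_dist d p (f x) (g x)) \<in> borel_measurable M"
proof (cases p)
  case (enat q)
  show ?thesis unfolding torus_dist_def enat circ_dist_def using f g by simp
next
  case infinity
  show ?thesis unfolding torus_dist_def infinity insert0_image circ_dist_def using f g by measurable
qed

lemma circ_dist_nonneg: "a \<in> {0..1} \<Longrightarrow> b \<in> {0..1} \<Longrightarrow> circ_dist a b \<ge> 0"
  by (auto simp: circ_dist_def)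

lemma root_eq_powr: "0 < q \<Longrightarrow> 0 \<le> x \<Longrightarrow> x powr (1 / real q) = root q x"
  by (simp add: root_powr_inverse)

lemma torus_dist_enat: "0 < q \<Longrightarrow> (\<And>i. i < d \<Longrightarrow> circ_dist (c i) (x i) \<ge> 0) \<Longrightarrow>
   torus_dist d (enat q) c x = root q (\<Sum>i<d. circ_dist (c i) (x i) ^ q)"
proof -
  assume q: "0 < q" and nn: "\<And>i. i < d \<Longrightarrow> circ_dist (c i) (x i) \<ge> 0"
  have "0 \<le> (\<Sum>i<d. circ_dist (c i) (x i) ^ q)" by (intro sum_nonneg) (simp add: nn)
  then show ?thesis unfolding torus_dist_def using root_eq_powr[OF q] by simp
qed

lemma torus_dist_ge_coord:
  assumes p: "p \<ge> 1" and nn: "\<And>i. i < d \<Longrightarrow> circ_dist (c i) (x i) \<ge> 0" and i: "i < d"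
  shows "circ_dist (c i) (x i) \<le> torus_dist d p c x"
proof (cases p)
  case (enat q)
  then have q: "0 < q" using p by (simp add: one_enat_def)
  have "circ_dist (c i) (x i) ^ q \<le> (\<Sum>i<d. circ_dist (c i) (x i) ^ q)"
    by (rule member_le_sum) (use i nn in auto)
  then have "root q (circ_dist (c i) (x i) ^ q) \<le> root q (\<Sum>i<d. circ_dist (c i) (x i) ^ q)"
    using q by (simp add: real_root_le_iff)
  then show ?thesis using q nn i enat by (simp add: torus_dist_enat real_root_pos2)
next
  case infinity
  have "circ_dist (c i) (x i) \<le> Max (insert 0 {circ_dist (c i) (x i) |i. i < d})"
    by (rule Max_ge) (use i in auto)
  then show ?thesis by (simp add: torus_dist_def infinity)
qed

lemma torus_dist_nonneg:
  assumes p: "p \<ge> 1" and nn: "\<And>i. i < d \<Longrightarrow> circ_dist (c i) (x i) \<ge> 0"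
  shows "torus_dist d p c x \<ge> 0"
proof (cases p)
  case (enat q)
  then have q: "0 < q" using p by (simp add: one_enat_def)
  have "0 \<le> (\<Sum>i<d. circ_dist (c i) (x i) ^ q)" by (intro sum_nonneg) (simp add: nn)
  then show ?thesis using nn enat q by (simp add: torus_dist_enat)
next
  case infinity
  have "0 \<le> Max (insert 0 {circ_dist (c i) (x i) |i. i < d})" by (rule Max_ge) auto
  then show ?thesis by (simp add: torus_dist_def infinity)
qed

lemma torus_dist_less:
  assumes p: "p \<ge> 1" and d: "d \<ge> 1" and nn: "\<And>i. i < d \<Longrightarrow> circ_dist (c i) (x i) \<ge> 0"
    and lt: "\<And>i. i < d \<Longrightarrow> circ_dist (c i) (x i) < \<rho>"
  shows "torus_dist d p c x < real d * \<rho>"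
proof -
  have rho: "\<rho> > 0" using lt[of 0] nn[of 0] d by linarith
  show ?thesis
  proof (cases p)
    case (enat q)
    then have q: "0 < q" using p by (simp add: one_enat_def)
    have "(\<Sum>i<d. circ_dist (c i) (x i) ^ q) < (\<Sum>i<d. \<rho> ^ q)"
      by (rule sum_strict_mono) (use d nn lt q in \<open>auto intro: power_strict_mono simp: lessThan_empty_iff\<close>)
    then have "root q (\<Sum>i<d. circ_dist (c i) (x i) ^ q) < root q (real d * \<rho> ^ q)"
      using q by simp
    also have "root q (real d * \<rho> ^ q) = root q (real d) * \<rho>"
      using q rho by (simp add: real_root_mult real_root_pos2)
    also have "\<dots> \<le> real d * \<rho>"
    proof -
      have "root q (real d) \<le> real d"
      proof -
        have "root q (real d) \<le> root q (real d ^ q)"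
          using q d by (intro real_root_le_mono) (auto intro: self_le_power)
        also have "\<dots> = real d" using q by (simp add: real_root_pos2)
        finally show ?thesis .
      qed
      then show ?thesis using rho by (intro mult_right_mono) auto
    qed
    finally show ?thesis using enat q nn by (simp add: torus_dist_enat)
  next
    case infinity
    have "Max (insert 0 {circ_dist (c i) (x i) |i. i < d}) < \<rho>"
      using rho lt by (subst Max_less_iff) auto
    also have "\<rho> \<le> real d * \<rho>" using rho d by simp
    finally show ?thesis by (simp add: torus_dist_def infinity)
  qed
qed


definition Gd :: "nat \<Rightarrow> (nat \<Rightarrow> real) set" where
  "Gd d = PiE {..<d} (\<lambda>_. {0..1})"

definition Yw :: "nat \<Rightarrow> enat \<Rightarrow> real \<Rightarrow> (nat \<Rightarrow> real) \<Rightarrow> (nat \<Rightarrow> real) \<Rightarrow> real" where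
  "Yw d p wv c x = wv / torus_dist d p c x ^ d"

definition Eset :: "nat \<Rightarrow> enat \<Rightarrow> (nat \<Rightarrow> real) \<Rightarrow> real \<Rightarrow> real \<Rightarrow> (nat \<Rightarrow> real) set" where
  "Eset d p c wv y = {x \<in> Gd d. Yw d p wv c x > y}"

lemma component_torus_measurable[measurable]: "(\<lambda>x. x i) \<in> borel_measurable (torus d)"
proof (cases "i < d")
  case True
  then show ?thesis unfolding torus_def
    using measurable_component_singleton[of i "{..<d}" "\<lambda>_. UU"] by (simp add: measurable_def)
next
  case False
  have "(\<lambda>x. undefined) \<in> borel_measurable (torus d)" by simp
  then show ?thesis
    by (rule measurable_cong[THEN iffD1, rotated]) (use False in \<open>auto simp: space_torus PiE_def extensional_def\<close>)
qed

lemma Gd_sets[measurable]: "Gd d \<in> sets (torus d)"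
  unfolding Gd_def torus_def by (rule sets_PiM_I_finite) auto

lemma Gd_space: "Gd d \<subseteq> space (torus d)"
  unfolding Gd_def space_torus by auto

lemma emeasure_Gd: "emeasure (torus d) (Gd d) = 1"
  unfolding Gd_def torus_def
  by (subst emeasure_PiM_PiE_prob) (auto simp: prob_UU emeasure_UU)

lemma Yw_measurable[measurable]: "(\<lambda>x. Yw d p wv c x) \<in> borel_measurable (torus d)"
  unfolding Yw_def by measurable

lemma Eset_sets[measurable]: "Eset d p c wv y \<in> sets (torus d)"
proof -
  have "Eset d p c wv y = {x \<in> space (torus d). Yw d p wv c x > y} \<inter> Gd d"
    using Gd_space by (auto simp: Eset_def)
  also have "\<dots> \<in> sets (torus d)" by measurable
  finally show ?thesis .
qed

lemma Gd_circ_nonneg: "(\<forall>i<d. c i \<in> {0..1}) \<Longrightarrow> x \<in> Gd d \<Longrightarrow> i < d \<Longrightarrow> circ_dist (c i) (x i) \<ge> 0"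
  by (rule circ_dist_nonneg) (auto simp: Gd_def)

lemma coord_upper:
  assumes c: "c \<in> {0..1}" and r: "r > 0"
  shows "emeasure UU {t. t \<in> {0..1} \<and> circ_dist c t < r} \<le> ennreal (6 * r)"
proof -
  have meas: "{t. t \<in> {0..1} \<and> circ_dist c t < r} \<in> sets borel"
    unfolding circ_dist_def by measurable
  have sub: "{0..1} \<inter> {t. t \<in> {0..1} \<and> circ_dist c t < r} \<subseteq>
      ({c - r<..<c + r} \<union> {c - 1 - r<..<c - 1 + r}) \<union> {c + 1 - r<..<c + 1 + r}"
    using c by (auto simp: circ_dist_def min_def abs_if split: if_splits)
  have "emeasure UU {t. t \<in> {0..1} \<and> circ_dist c t < r} = emeasure lborel ({0..1} \<inter> {t. t \<in> {0..1} \<and> circ_dist c t < r})"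
    by (rule emeasure_UU[OF meas])
  also have "\<dots> \<le> emeasure lborel (({c - r<..<c + r} \<union> {c - 1 - r<..<c - 1 + r}) \<union> {c + 1 - r<..<c + 1 + r})"
    by (rule emeasure_mono[OF sub]) simp
  also have "\<dots> \<le> emeasure lborel ({c - r<..<c + r} \<union> {c - 1 - r<..<c - 1 + r}) + emeasure lborel {c + 1 - r<..<c + 1 + r}"
    by (rule emeasure_subadditive) auto
  also have "emeasure lborel ({c - r<..<c + r} \<union> {c - 1 - r<..<c - 1 + r}) \<le> emeasure lborel {c - r<..<c + r} + emeasure lborel {c - 1 - r<..<c - 1 + r}"
    by (rule emeasure_subadditive) auto
  also have "emeasure lborel {c - r<..<c + r} + emeasure lborel {c - 1 - r<..<c - 1 + r} + emeasure lborel {c + 1 - r<..<c + 1 + r}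
      = ennreal (2*r) + ennreal (2*r) + ennreal (2*r)"
    using r by simp
  also have "\<dots> = ennreal (6 * r)" using r by (simp add: ennreal_plus[symmetric] del: ennreal_plus)
  finally show ?thesis by (simp add: add_right_mono)
qed

lemma Yw_gt_iff:
  assumes d: "d \<ge> 1" and wv: "wv > 0" and y: "y > 0" and t: "torus_dist d p c x \<ge> 0"
  shows "Yw d p wv c x > y \<longleftrightarrow> 0 < torus_dist d p c x \<and> torus_dist d p c x < root d (wv / y)"
proof -
  let ?t = "torus_dist d p c x"
  have d0: "0 < d" using d by simp
  show ?thesis
  proof (cases "?t = 0")
    case True then show ?thesis using d y by (simp add: Yw_def power_0_left)
  next
    case False
    then have tp: "?t > 0" using t by simp
    have "Yw d p wv c x > y \<longleftrightarrow> ?t ^ d < wv / y"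
      using tp y wv by (simp add: Yw_def field_simps)
    also have "\<dots> \<longleftrightarrow> root d (?t ^ d) < root d (wv / y)" using d0 by simp
    also have "root d (?t ^ d) = ?t" using d0 tp by (simp add: real_root_pos2)
    finally show ?thesis using tp by simp
  qed
qed

lemma Eset_upper:
  assumes d: "d \<ge> 1" and p: "p \<ge> 1" and c: "\<forall>i<d. c i \<in> {0..1}" and wv: "wv > 0" and y: "y > 0"
  shows "measure (torus d) (Eset d p c wv y) \<le> 6 ^ d * (wv / y)"
proof -
  interpret D: prob_space "torus d" by (rule prob_torus)
  define r where "r = root d (wv / y)"
  have r: "r > 0" using wv y d unfolding r_def by simp
  define B where "B = PiE {..<d} (\<lambda>i. {t. t \<in> {0..1} \<and> circ_dist (c i) t < r})"
  have Bsets: "\<And>i. {t. t \<in> {0..1} \<and> circ_dist (c i) t < r} \<in> sets UU"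
    unfolding circ_dist_def by simp
  have sub: "Eset d p c wv y \<subseteq> B"
  proof
    fix x assume x: "x \<in> Eset d p c wv y"
    then have xG: "x \<in> Gd d" and Y: "Yw d p wv c x > y" by (auto simp: Eset_def)
    have nn: "\<And>i. i < d \<Longrightarrow> circ_dist (c i) (x i) \<ge> 0" using c xG by (rule Gd_circ_nonneg)
    have t0: "torus_dist d p c x \<ge> 0" by (rule torus_dist_nonneg[OF p nn])
    have tr: "torus_dist d p c x < r" using Yw_gt_iff[OF d wv y t0] Y by (simp add: r_def)
    have "\<And>i. i < d \<Longrightarrow> circ_dist (c i) (x i) < r"
      using torus_dist_ge_coord[of p d c x, OF p nn] tr by (meson le_less_trans)
    then show "x \<in> B" unfolding B_def using xG
      by (auto simp: Gd_def PiE_iff)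
  qed
  have "emeasure (torus d) (Eset d p c wv y) \<le> emeasure (torus d) B"
    by (rule emeasure_mono[OF sub]) (unfold B_def torus_def, rule sets_PiM_I_finite, use Bsets in auto)
  also have "emeasure (torus d) B = (\<Prod>i<d. emeasure UU {t. t \<in> {0..1} \<and> circ_dist (c i) t < r})"
    unfolding B_def torus_def by (rule emeasure_PiM_PiE_prob) (use prob_UU Bsets in auto)
  also have "\<dots> \<le> (\<Prod>i<d. ennreal (6 * r))"
    by (rule prod_mono_ennreal) (use coord_upper c r in auto)
  also have "\<dots> = ennreal ((6 * r) ^ d)" using r by (simp add: ennreal_power)
  finally have "measure (torus d) (Eset d p c wv y) \<le> (6 * r) ^ d"
    using r by (simp add: D.emeasure_eq_measure ennreal_le_iff)
  also have "(6 * r) ^ d = 6 ^ d * (wv / y)"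
    using d wv y unfolding r_def by (simp add: power_mult_distrib real_root_pow_pos2)
  finally show ?thesis .
qed

lemma Eset_lower:
  assumes d: "d \<ge> 1" and p: "p \<ge> 1" and c: "\<forall>i<d. c i \<in> {0..1}" and wv: "wv > 0" and y: "y > 0"
    and small: "wv / y \<le> (1/2) ^ d"
  shows "measure (torus d) (Eset d p c wv y) \<ge> (wv / y) / real d ^ d"
proof -
  interpret D: prob_space "torus d" by (rule prob_torus)
  define r where "r = root d (wv / y)"
  have d0: "0 < d" using d by simp
  have r: "r > 0" using wv y d unfolding r_def by simp
  have r2: "r \<le> 1/2"
  proof -
    have "r \<le> root d ((1/2) ^ d)" unfolding r_def using small d0 by simp
    also have "\<dots> = 1/2" using d0 by (simp add: real_root_pos2)
    finally show ?thesis .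
  qed
  define \<rho> where "\<rho> = r / real d"
  have rho: "\<rho> > 0" "\<rho> \<le> 1/2" using r r2 d unfolding \<rho>_def by (auto simp: field_simps)
  define I where "I = (\<lambda>i. if c i \<le> 1/2 then {c i<..<c i + \<rho>} else {c i - \<rho><..<c i})"
  have Isets: "\<And>i. I i \<in> sets UU" unfolding I_def by auto
  have Iprop: "\<And>i t. i < d \<Longrightarrow> t \<in> I i \<Longrightarrow> t \<in> {0..1} \<and> 0 < circ_dist (c i) t \<and> circ_dist (c i) t < \<rho>"
  proof -
    fix i t assume i: "i < d" and t: "t \<in> I i"
    have ci: "c i \<in> {0..1}" using c i by auto
    have a: "0 < \<bar>c i - t\<bar>" "\<bar>c i - t\<bar> < \<rho>" "t \<in> {0..1}"
      using t ci rho unfolding I_def by (auto split: if_splits)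
    then have "circ_dist (c i) t = \<bar>c i - t\<bar>" using rho by (simp add: circ_dist_def min_def)
    then show "t \<in> {0..1} \<and> 0 < circ_dist (c i) t \<and> circ_dist (c i) t < \<rho>" using a by simp
  qed
  have sub: "PiE {..<d} I \<subseteq> Eset d p c wv y"
  proof
    fix x assume x: "x \<in> PiE {..<d} I"
    have xG: "x \<in> Gd d" using x Iprop by (auto simp: Gd_def PiE_iff)
    have nn: "\<And>i. i < d \<Longrightarrow> circ_dist (c i) (x i) \<ge> 0" using c xG by (rule Gd_circ_nonneg)
    have lt: "\<And>i. i < d \<Longrightarrow> circ_dist (c i) (x i) < \<rho>" using x Iprop by (auto simp: PiE_iff)
    have t0: "torus_dist d p c x \<ge> 0" by (rule torus_dist_nonneg[OF p nn])
    have tpos: "torus_dist d p c x > 0"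
      using torus_dist_ge_coord[of p d c x 0, OF p nn] d0 Iprop[of 0 "x 0"] x
      by (fastforce simp: PiE_iff)
    have "torus_dist d p c x < real d * \<rho>" by (rule torus_dist_less[OF p d nn lt])
    then have tr: "torus_dist d p c x < r" using d unfolding \<rho>_def by simp
    show "x \<in> Eset d p c wv y" unfolding Eset_def using xG Yw_gt_iff[OF d wv y t0] tpos tr
      by (simp add: r_def)
  qed
  have "emeasure (torus d) (PiE {..<d} I) = (\<Prod>i<d. emeasure UU (I i))"
    unfolding torus_def by (rule emeasure_PiM_PiE_prob) (use prob_UU Isets in auto)
  also have "\<dots> = (\<Prod>i<d. ennreal \<rho>)"
  proof (rule prod.cong[OF refl])
    fix i assume "i \<in> {..<d}"
    then have ci: "c i \<in> {0..1}" using c by auto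
    have "{0..1} \<inter> I i = I i" using ci rho unfolding I_def by auto
    then show "emeasure UU (I i) = ennreal \<rho>" using rho
      by (simp add: emeasure_UU[OF Isets[unfolded sets_UU]] I_def divide_ennreal_def)
  qed
  also have "\<dots> = ennreal (\<rho> ^ d)" using rho by (simp add: ennreal_power)
  finally have e: "emeasure (torus d) (PiE {..<d} I) = ennreal (\<rho> ^ d)" .
  have "ennreal (\<rho> ^ d) \<le> emeasure (torus d) (Eset d p c wv y)"
    unfolding e[symmetric] by (rule emeasure_mono[OF sub]) simp
  then have "\<rho> ^ d \<le> measure (torus d) (Eset d p c wv y)"
    by (simp add: D.emeasure_eq_measure)
  moreover have "\<rho> ^ d = (wv / y) / real d ^ d"
    using d0 wv y unfolding \<rho>_def r_def by (simp add: power_divide real_root_pow_pos2)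
  ultimately show ?thesis by simp
qed


lemma conn_weight_measurable[measurable]:
  assumes [measurable]: "\<And>i. (\<lambda>x. c x i) \<in> borel_measurable M" "\<And>i. (\<lambda>x. y x i) \<in> borel_measurable M"
  shows "(\<lambda>x. conn_weight d p T wv (c x) (y x)) \<in> borel_measurable M"
  unfolding conn_weight_def by measurable

lemma seq_prob_measurable[measurable]:
  assumes [measurable]: "\<And>v. (\<lambda>x. X v x) \<in> borel_measurable M"
  shows "(\<lambda>x. seq_prob (\<lambda>v. X v x) S us) \<in> borel_measurable M"
proof (induction us arbitrary: S)
  case Nil then show ?case by simp
next
  case (Cons u us)
  have [measurable]: "(\<lambda>x. seq_prob (\<lambda>v. X v x) (S - {u}) us) \<in> borel_measurable M" by (rule Cons.IH)
  show ?case by (cases "u \<in> S") simp_all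
qed

lemma nice_seq_measurable[measurable]:
  assumes Xm: "\<And>v. (\<lambda>x. X v x) \<in> borel_measurable M" and S: "finite S"
  shows "Measurable.pred M (\<lambda>x. nice_seq (\<lambda>v. X v x) S us)"
proof -
  have eq: "\<And>x. nice_seq (\<lambda>v. X v x) S us = (\<forall>j\<in>{..<length us}. \<forall>v\<in>S - set (take (Suc j) us). X v x < X (us ! j) x)"
    unfolding nice_seq_def by auto
  show ?thesis unfolding eq
    by (rule pred_intros_finite(3), simp, rule pred_intros_finite(3)) (use S Xm in auto)
qed

lemma npg_measurable:
  assumes [measurable]: "\<And>i. (\<lambda>x. c x i) \<in> borel_measurable M" "\<And>v i. (\<lambda>x. xs x v i) \<in> borel_measurable M"
  shows "(\<lambda>x. nice_prob_given d p T k n w (xs x) (c x)) \<in> borel_measurable M"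
proof -
  have cw[measurable]: "\<And>v. (\<lambda>x. conn_weight d p T (w v) (c x) (xs x v)) \<in> borel_measurable M" by measurable
  show ?thesis unfolding nice_prob_given_eq
  proof (rule borel_measurable_sum)
    fix us
    have [measurable]: "Measurable.pred M (\<lambda>x. nice_seq (\<lambda>v. conn_weight d p T (w v) (c x) (xs x v)) {..<n} us)"
      by (rule nice_seq_measurable) (use cw in auto)
    have [measurable]: "(\<lambda>x. seq_prob (\<lambda>v. conn_weight d p T (w v) (c x) (xs x v)) {..<n} us) \<in> borel_measurable M"
      by (rule seq_prob_measurable) (use cw in auto)
    show "(\<lambda>x. if nice_seq (\<lambda>v. conn_weight d p T (w v) (c x) (xs x v)) {..<n} us
          then seq_prob (\<lambda>v. conn_weight d p T (w v) (c x) (xs x v)) {..<n} us else 0) \<in> borel_measurable M"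
      by measurable
  qed
qed


definition "bC (d::nat) = (6::real) ^ d"
definition "aC (d::nat) = 1 / real d ^ d"
definition "sC d = 2 * bC d"
definition "KC d = 2 * bC d / aC d"
definition "A0 d k = (1/2) * (1 / (4 * KC d ^ k)) ^ k"
definition "gam (T::real) = (1/2) powr (1/T)"
definition "B0 T = 1 / (1 - 2 * gam T) + 1"
definition "MC d k T = 2 * B0 T / A0 d k"
definition "thC d k T = 1 / (1 + real k + MC d k T)"
definition "c0 d k T = thC d k T ^ k * A0 d k / 2"
definition "del0 d k = min (sC d * (1/2) ^ d) (1 / (2 * (real k + 1) * KC d ^ k))"

lemma consts_pos:
  assumes d: "d \<ge> 1" and T: "0 < T" "T < 1"
  shows "bC d \<ge> 1" "aC d > 0" "aC d \<le> 1" "sC d > 0" "KC d \<ge> 2" "A0 d k > 0"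
    "gam T > 0" "2 * gam T < 1" "B0 T > 0" "MC d k T > 0" "thC d k T > 0" "c0 d k T > 0" "del0 d k > 0"
proof -
  show b: "bC d \<ge> 1" unfolding bC_def by simp
  show a: "aC d > 0" unfolding aC_def using d by simp
  show a1: "aC d \<le> 1" unfolding aC_def using d by (simp add: one_le_power)
  show "sC d > 0" unfolding sC_def using b by simp
  have "2 * bC d / aC d \<ge> 2 * 1 / 1" using a a1 b by (intro frac_le) auto
  then show K: "KC d \<ge> 2" unfolding KC_def by simp
  then show A: "A0 d k > 0" unfolding A0_def by simp
  show g: "gam T > 0" unfolding gam_def by simp
  have "(1/2::real) powr (1/T) < (1/2) powr 1" using T by (intro powr_less_mono') auto
  then show g2: "2 * gam T < 1" unfolding gam_def by simp
  then have "1 / (1 - 2 * gam T) > 0" by simp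
  then show B: "B0 T > 0" unfolding B0_def by linarith
  then show M: "MC d k T > 0" unfolding MC_def using A by simp
  then show th: "thC d k T > 0" unfolding thC_def by simp
  then show "c0 d k T > 0" unfolding c0_def using A by simp
  show "del0 d k > 0" unfolding del0_def sC_def using b K by simp
qed


locale LB =
  fixes d :: nat and p :: enat and T :: real and k n :: nat and w :: "nat \<Rightarrow> real" and c :: "nat \<Rightarrow> real"
  assumes d: "d \<ge> 1" and p: "p \<ge> 1" and T: "0 < T" "T < 1"
    and c: "\<forall>i<d. c i \<in> {0..1}" and w: "\<And>v. v < n \<Longrightarrow> w v \<ge> 1" and n: "n \<ge> 1"
    and small: "Max (w ` {..<n}) / (\<Sum>v<n. w v) \<le> del0 d k"
begin

definition "W = (\<Sum>v<n. w v)"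
definition "mw = Max (w ` {..<n})"
definition "\<sigma> j = W * sC d * KC d ^ (k - j)"
definition "E v y = Eset d p c (w v) y"
definition "eps = mw / (2 * W)"

lemma W_pos: "W \<ge> 1"
proof -
  have "w 0 \<le> W" unfolding W_def
    by (rule member_le_sum) (use w n in \<open>auto intro: order_trans[OF zero_le_one]\<close>)
  then show ?thesis using w[of 0] n by simp
qed

lemma w_le_mw: "v < n \<Longrightarrow> w v \<le> mw"
  unfolding mw_def by (rule Max_ge) auto

lemma w_pos: "v < n \<Longrightarrow> w v > 0" using w[of v] by simp

lemma mwW: "mw / W \<le> del0 d k" using small unfolding mw_def W_def .

lemma sigma_pos: "\<sigma> j > 0"
  unfolding \<sigma>_def using W_pos consts_pos[OF d T] by simp

lemma sigma_mono: "j \<le> j' \<Longrightarrow> \<sigma> j' \<le> \<sigma> j"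
proof -
  assume "j \<le> j'"
  then have "KC d ^ (k - j') \<le> KC d ^ (k - j)" using consts_pos[OF d T] by (intro power_increasing) auto
  then show ?thesis unfolding \<sigma>_def using W_pos consts_pos[OF d T]
    by (intro mult_left_mono) auto
qed

lemma sigma_k: "\<sigma> k = W * sC d" unfolding \<sigma>_def by simp

lemma sigma_Suc: "j < k \<Longrightarrow> \<sigma> j = \<sigma> (Suc j) * KC d"
  unfolding \<sigma>_def by (simp add: Suc_diff_Suc power_Suc[symmetric] mult_ac)

lemma ratio_small: "v < n \<Longrightarrow> y \<ge> \<sigma> k \<Longrightarrow> w v / y \<le> (1/2) ^ d"
proof -
  assume v: "v < n" and y: "y \<ge> \<sigma> k"
  have "w v / y \<le> mw / (W * sC d)"
    using w_le_mw[OF v] w_pos[OF v] y sigma_k sigma_pos[of k] consts_pos[OF d T] W_pos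
    by (intro frac_le) auto
  also have "\<dots> = (mw / W) / sC d" by simp
  also have "\<dots> \<le> del0 d k / sC d" using mwW consts_pos[OF d T] by (intro divide_right_mono) auto
  also have "\<dots> \<le> (sC d * (1/2) ^ d) / sC d" unfolding del0_def using consts_pos[OF d T]
    by (intro divide_right_mono) auto
  also have "\<dots> = (1/2) ^ d" using consts_pos[OF d T] by simp
  finally show ?thesis .
qed

lemma E_sets[measurable]: "E v y \<in> sets (torus d)" unfolding E_def by simp

lemma E_Gd: "E v y \<subseteq> Gd d" unfolding E_def Eset_def by auto

lemma E_anti: "y1 \<le> y2 \<Longrightarrow> E v y2 \<subseteq> E v y1" unfolding E_def Eset_def by auto

lemma E_upper: "v < n \<Longrightarrow> y > 0 \<Longrightarrow> measure (torus d) (E v y) \<le> bC d * (w v / y)"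
  unfolding E_def bC_def using Eset_upper[OF d p c w_pos] by simp

lemma E_lower: "v < n \<Longrightarrow> y \<ge> \<sigma> k \<Longrightarrow> measure (torus d) (E v y) \<ge> aC d * (w v / y)"
proof -
  assume v: "v < n" and y: "y \<ge> \<sigma> k"
  have y0: "y > 0" using y sigma_pos[of k] by simp
  show ?thesis unfolding E_def aC_def
    using Eset_lower[OF d p c w_pos[OF v] y0 ratio_small[OF v y]] by (simp add: mult.commute)
qed

definition "band v j = E v (\<sigma> (Suc j)) - (if j = 0 then {} else E v (\<sigma> j))"
definition "Cs v = Gd d - E v (\<sigma> k)"
definition "pb v j = measure (torus d) (band v j)"
definition "q v = measure (torus d) (E v (\<sigma> k))"

lemma band_sets[measurable]: "band v j \<in> sets (torus d)" unfolding band_def by auto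
lemma Cs_sets[measurable]: "Cs v \<in> sets (torus d)" unfolding Cs_def by auto

lemma pb_lower:
  assumes v: "v < n" and j: "j < k"
  shows "pb v j \<ge> aC d * (w v / \<sigma> (Suc j)) - bC d * (w v / \<sigma> j)"
proof -
  interpret D: prob_space "torus d" by (rule prob_torus)
  have l: "measure (torus d) (E v (\<sigma> (Suc j))) \<ge> aC d * (w v / \<sigma> (Suc j))"
    using E_lower[OF v sigma_mono[of "Suc j" k]] j by simp
  have u: "measure (torus d) (E v (\<sigma> j)) \<le> bC d * (w v / \<sigma> j)" using E_upper[OF v sigma_pos] .
  have nn: "0 \<le> bC d * (w v / \<sigma> j)" using consts_pos[OF d T] w_pos[OF v] sigma_pos[of j] by simp
  show ?thesis
  proof (cases "j = 0")
    case True then show ?thesis using l nn by (simp add: pb_def band_def)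
  next
    case False
    have sub: "E v (\<sigma> j) \<subseteq> E v (\<sigma> (Suc j))" by (rule E_anti[OF sigma_mono]) simp
    have "pb v j = measure (torus d) (E v (\<sigma> (Suc j))) - measure (torus d) (E v (\<sigma> j))"
      unfolding pb_def band_def using False sub by (simp add: D.finite_measure_Diff)
    then show ?thesis using l u by simp
  qed
qed

lemma pb_nonneg: "pb v j \<ge> 0" unfolding pb_def by simp

lemma pb_upper:
  assumes v: "v < n" and j: "j < k"
  shows "pb v j \<le> eps"
proof -
  interpret D: prob_space "torus d" by (rule prob_torus)
  have "pb v j \<le> measure (torus d) (E v (\<sigma> (Suc j)))"
    unfolding pb_def band_def by (rule D.finite_measure_mono) auto
  also have "\<dots> \<le> bC d * (w v / \<sigma> (Suc j))" using E_upper[OF v sigma_pos] .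
  also have "\<dots> \<le> bC d * (mw / (W * sC d))"
    using w_le_mw[OF v] w_pos[OF v] sigma_mono[of "Suc j" k] j sigma_k sigma_pos[of k] consts_pos[OF d T] W_pos
    by (intro mult_left_mono frac_le) auto
  also have "\<dots> = eps" unfolding eps_def sC_def using consts_pos[OF d T] by (simp add: field_simps)
  finally show ?thesis .
qed

lemma eps_nonneg: "eps \<ge> 0"
  unfolding eps_def using W_pos w_le_mw[of 0] w_pos[of 0] n by simp

lemma sum_pb:
  assumes j: "j < k"
  shows "(\<Sum>v<n. pb v j) \<ge> 1 / (2 * KC d ^ (k - j))"
proof -
  have "(\<Sum>v<n. pb v j) \<ge> (\<Sum>v<n. aC d * (w v / \<sigma> (Suc j)) - bC d * (w v / \<sigma> j))"
    by (rule sum_mono) (use pb_lower j in auto)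
  also have "(\<Sum>v<n. aC d * (w v / \<sigma> (Suc j)) - bC d * (w v / \<sigma> j))
      = W * (aC d / \<sigma> (Suc j) - bC d / \<sigma> j)"
    unfolding W_def by (simp add: sum_subtractf sum_distrib_left sum_distrib_right sum_divide_distrib[symmetric] algebra_simps)
  also have "W * (aC d / \<sigma> (Suc j) - bC d / \<sigma> j) = 1 / (2 * KC d ^ (k - j))"
  proof -
    have K: "KC d * aC d = 2 * bC d" unfolding KC_def using consts_pos[OF d T] by simp
    have e1: "\<sigma> (Suc j) = W * sC d * KC d ^ (k - Suc j)" unfolding \<sigma>_def ..
    have e2: "\<sigma> j = W * sC d * KC d ^ (k - Suc j) * KC d" using sigma_Suc[OF j] e1 by simp
    have e3: "KC d ^ (k - j) = KC d ^ (k - Suc j) * KC d"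
      using j by (simp add: Suc_diff_Suc power_Suc[symmetric] mult_ac)
    show ?thesis unfolding e2 e3 unfolding e1 sC_def using W_pos consts_pos[OF d T] K
      by (simp add: field_simps)
  qed
  finally show ?thesis .
qed

lemma q_nonneg: "q v \<ge> 0" unfolding q_def by simp
lemma q_le1: "q v \<le> 1" unfolding q_def
  using prob_space.prob_le_1[OF prob_torus] by blast

lemma q_sum: "(\<Sum>v<n. q v) \<le> 1/2"
proof -
  have "(\<Sum>v<n. q v) \<le> (\<Sum>v<n. bC d * (w v / \<sigma> k))"
    by (rule sum_mono) (use E_upper sigma_pos in \<open>auto simp: q_def\<close>)
  also have "\<dots> = bC d * W / \<sigma> k" unfolding W_def
    by (simp add: sum_distrib_left sum_divide_distrib[symmetric])
  also have "\<dots> = 1/2" unfolding sigma_k sC_def using W_pos consts_pos[OF d T] by simp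
  finally show ?thesis .
qed

lemma Cs_measure: "measure (torus d) (Cs v) = 1 - q v"
proof -
  interpret D: prob_space "torus d" by (rule prob_torus)
  have "measure (torus d) (Gd d) = 1" using emeasure_Gd[of d] by (simp add: D.emeasure_eq_measure)
  then show ?thesis unfolding Cs_def q_def using E_Gd by (simp add: D.finite_measure_Diff)
qed

end


lemma measure_PiM_PiE_prob:
  assumes "\<And>i. i \<in> I \<Longrightarrow> prob_space (M i)" "finite I" "\<And>i. i \<in> I \<Longrightarrow> A i \<in> sets (M i)"
  shows "measure (PiM I M) (PiE I A) = (\<Prod>i\<in>I. measure (M i) (A i))"
proof -
  have "emeasure (PiM I M) (PiE I A) = (\<Prod>i\<in>I. emeasure (M i) (A i))"
    by (rule emeasure_PiM_PiE_prob[OF assms])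
  also have "\<dots> = (\<Prod>i\<in>I. ennreal (measure (M i) (A i)))"
    using assms by (intro prod.cong refl) (simp add: finite_measure.emeasure_eq_measure[OF prob_space.finite_measure])
  also have "\<dots> = ennreal (\<Prod>i\<in>I. measure (M i) (A i))" by (simp add: prod_ennreal)
  finally show ?thesis by (simp add: measure_def prod_nonneg)
qed

context LB begin

definition "PN = PiM {..<n} (\<lambda>_. torus d)"
definition "idx l u = (LEAST j. l ! j = u)"
definition "A l u = (if u \<in> set l then band u (idx l u) else Cs u)"
definition "S l = PiE {..<n} (A l)"

lemma prob_PN: "prob_space PN" unfolding PN_def by (rule prob_space_PiM) (rule prob_torus)

lemma idx_nth: "distinct l \<Longrightarrow> j < length l \<Longrightarrow> idx l (l ! j) = j"
  unfolding idx_def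
proof (rule Least_equality)
  fix y assume "distinct l" "j < length l" "l ! y = l ! j"
  then show "j \<le> y" using nth_eq_iff_index_eq[of l y j] by (cases "y < length l") auto
qed simp

lemma A_sets: "A l u \<in> sets (torus d)" unfolding A_def by simp

lemma S_sets[measurable]: "S l \<in> sets PN"
  unfolding S_def PN_def by (rule sets_PiM_I_finite) (auto simp: A_sets)

lemma S_measure:
  assumes l: "l \<in> Ls k {..<n}"
  shows "measure PN (S l) = (\<Prod>j<k. pb (l ! j) j) * (\<Prod>u\<in>{..<n} - set l. 1 - q u)"
proof -
  have dl: "distinct l" and ll: "length l = k" and sl: "set l \<subseteq> {..<n}" using l by (auto simp: Ls_def)
  have "measure PN (S l) = (\<Prod>u<n. measure (torus d) (A l u))"
    unfolding S_def PN_def by (rule measure_PiM_PiE_prob) (auto simp: prob_torus A_sets)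
  also have "\<dots> = (\<Prod>u\<in>set l. measure (torus d) (A l u)) * (\<Prod>u\<in>{..<n} - set l. measure (torus d) (A l u))"
    using sl by (subst prod.union_disjoint[symmetric]) (auto intro!: prod.cong)
  also have "(\<Prod>u\<in>set l. measure (torus d) (A l u)) = (\<Prod>j<k. pb (l ! j) j)"
  proof -
    have inj: "inj_on ((!) l) {..<k}" using dl ll by (auto simp: inj_on_def nth_eq_iff_index_eq)
    have img: "set l = (!) l ` {..<k}" using ll by (auto simp: in_set_conv_nth)
    show ?thesis unfolding img prod.reindex[OF inj]
      by (intro prod.cong refl) (use dl ll in \<open>auto simp: A_def idx_nth pb_def\<close>)
  qed
  also have "(\<Prod>u\<in>{..<n} - set l. measure (torus d) (A l u)) = (\<Prod>u\<in>{..<n} - set l. 1 - q u)"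
    by (intro prod.cong refl) (auto simp: A_def Cs_measure)
  finally show ?thesis .
qed

lemma eps_small: "real k * eps \<le> 1 / (4 * KC d ^ k)"
proof -
  have K: "KC d ^ k > 0" using consts_pos[OF d T] by simp
  have "eps = (mw / W) / 2" unfolding eps_def by simp
  also have "\<dots> \<le> del0 d k / 2" using mwW by simp
  also have "\<dots> \<le> (1 / (2 * (real k + 1) * KC d ^ k)) / 2" unfolding del0_def by simp
  also have "(1 / (2 * (real k + 1) * KC d ^ k)) / 2 = 1 / (4 * (real k + 1) * KC d ^ k)" by simp
  finally have e: "eps \<le> 1 / (4 * (real k + 1) * KC d ^ k)" .
  have "real k * eps \<le> real k * (1 / (4 * (real k + 1) * KC d ^ k))"
    using e by (intro mult_left_mono) auto
  also have "\<dots> = (real k / (real k + 1)) * (1 / (4 * KC d ^ k))" by (simp add: field_simps)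
  also have "\<dots> \<le> 1 * (1 / (4 * KC d ^ k))" using K by (intro mult_right_mono) auto
  also have "\<dots> = 1 / (4 * KC d ^ k)" by simp
  finally show ?thesis .
qed

lemma sum_S_lower: "(\<Sum>l\<in>Ls k {..<n}. measure PN (S l)) \<ge> A0 d k"
proof -
  define f where "f j v = (if j < k then pb v j else 0)" for j v
  have half: "(\<Prod>u\<in>{..<n} - set l. 1 - q u) \<ge> 1/2" for l
  proof -
    have "(\<Prod>u\<in>{..<n} - set l. 1 - q u) \<ge> 1 - (\<Sum>u\<in>{..<n} - set l. q u)"
      by (rule prod_one_minus_ge) (auto simp: q_nonneg q_le1)
    moreover have "(\<Sum>u\<in>{..<n} - set l. q u) \<le> (\<Sum>u<n. q u)"
      by (rule sum_mono2) (auto simp: q_nonneg)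
    ultimately show ?thesis using q_sum by linarith
  qed
  have K: "KC d ^ k > 0" using consts_pos[OF d T] by simp
  have Pj: "1 / (4 * KC d ^ k) \<le> 1 / (2 * KC d ^ (k - j)) - real j * eps" if "j < k" for j
  proof -
    have "KC d ^ (k - j) \<le> KC d ^ k" using consts_pos[OF d T] by (intro power_increasing) auto
    then have "1 / (2 * KC d ^ k) \<le> 1 / (2 * KC d ^ (k - j))"
      using K consts_pos[OF d T] by (intro divide_left_mono) auto
    moreover have "real j * eps \<le> real k * eps" using that eps_nonneg by (intro mult_right_mono) auto
    ultimately show ?thesis using eps_small by (simp add: field_simps)
  qed
  have s1: "(\<Sum>l\<in>Ls k {..<n}. measure PN (S l)) \<ge> (\<Sum>l\<in>Ls k {..<n}. (\<Prod>j<k. f j (l ! j)) * (1/2))"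
  proof (rule sum_mono)
    fix l assume l: "l \<in> Ls k {..<n}"
    have "(\<Prod>j<k. f j (l ! j)) = (\<Prod>j<k. pb (l ! j) j)" by (simp add: f_def)
    moreover have "(\<Prod>j<k. pb (l ! j) j) \<ge> 0" by (intro prod_nonneg) (simp add: pb_nonneg)
    ultimately show "(\<Prod>j<k. f j (l ! j)) * (1/2) \<le> measure PN (S l)"
      unfolding S_measure[OF l] using half[of l] by (simp add: mult_left_mono del: times_divide_eq_right)
  qed
  have s2: "(\<Sum>l\<in>Ls k {..<n}. (\<Prod>j<k. f j (l ! j)) * (1/2)) = (\<Sum>l\<in>Ls k {..<n}. (\<Prod>j<k. f j (l ! j))) * (1/2)"
    by (simp only: sum_distrib_right)
  have s3: "(\<Sum>l\<in>Ls k {..<n}. (\<Prod>j<k. f j (l ! j))) \<ge> (\<Prod>j<k. 1 / (2 * KC d ^ (k - j)) - real j * eps)"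
  proof (rule Ls_prod_lower)
    show "\<And>j v. f j v \<ge> 0" by (simp add: f_def pb_nonneg)
    show "\<And>j v. v \<in> {..<n} \<Longrightarrow> f j v \<le> eps" using pb_upper eps_nonneg by (simp add: f_def)
    show "\<And>j. j < k \<Longrightarrow> 1 / (2 * KC d ^ (k - j)) \<le> (\<Sum>v<n. f j v)" using sum_pb by (simp add: f_def)
    show "\<And>j. j < k \<Longrightarrow> 1 / (2 * KC d ^ (k - j)) - real j * eps \<ge> 0"
      using Pj K by (smt (verit) divide_pos_pos)
  qed (auto simp: eps_nonneg)
  have s4: "(\<Prod>j<k. 1 / (2 * KC d ^ (k - j)) - real j * eps) \<ge> (\<Prod>j<k. 1 / (4 * KC d ^ k))"
    by (rule prod_mono) (use Pj K in auto)
  have "(1 / (4 * KC d ^ k)) ^ k \<le> (\<Sum>l\<in>Ls k {..<n}. (\<Prod>j<k. f j (l ! j)))"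
    using s3 s4 by simp
  then show ?thesis unfolding A0_def using s1 s2 by linarith
qed

end


context LB begin

definition "Xw xs v = conn_weight d p T (w v) c (xs v)"
definition "\<tau> j = \<sigma> j powr (1 / T)"
definition "H u i = E u (\<sigma> k / 2 ^ Suc i)"
definition "Rb xs = (\<Sum>u<n. (\<Sum>i<n. \<tau> k * gam T ^ i * indicator (H u i) (xs u)) + \<tau> k * gam T ^ n)"
definition "F xs = thC d k T ^ k * ((\<Sum>l\<in>Ls k {..<n}. indicator (S l) xs) - Rb xs / (MC d k T * \<tau> k))"

lemma Yw_nonneg: "x \<in> Gd d \<Longrightarrow> Yw d p (w v) c x \<ge> 0" if "v < n"
proof -
  assume x: "x \<in> Gd d"
  have "torus_dist d p c x \<ge> 0"
    by (rule torus_dist_nonneg[OF p]) (rule Gd_circ_nonneg[OF c x])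
  then show ?thesis unfolding Yw_def using w_pos[OF that] by simp
qed

lemma Xw_eq: "Xw xs v = Yw d p (w v) c (xs v) powr (1 / T)"
  unfolding Xw_def conn_weight_def Yw_def ..

lemma tau_pos: "\<tau> j > 0" unfolding \<tau>_def using sigma_pos[of j] by simp

lemma band_disj: "i < j \<Longrightarrow> band u i \<inter> band u j = {}"
proof -
  assume ij: "i < j"
  have "band u i \<subseteq> E u (\<sigma> (Suc i))" unfolding band_def by auto
  also have "\<dots> \<subseteq> E u (\<sigma> j)" by (rule E_anti[OF sigma_mono]) (use ij in simp)
  finally show ?thesis using ij unfolding band_def by auto
qed

lemma band_E_k: "j < k \<Longrightarrow> band u j \<subseteq> E u (\<sigma> k)"
proof -
  assume j: "j < k"
  have "band u j \<subseteq> E u (\<sigma> (Suc j))" unfolding band_def by auto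
  also have "\<dots> \<subseteq> E u (\<sigma> k)" by (rule E_anti[OF sigma_mono]) (use j in simp)
  finally show ?thesis .
qed

lemma S_mem_gen: "xs \<in> S l \<Longrightarrow> u < n \<Longrightarrow> xs u \<in> A l u"
  unfolding S_def by (auto simp: PiE_iff)

lemma Ls_nth: "l \<in> Ls k {..<n} \<Longrightarrow> j < k \<Longrightarrow> l ! j < n \<and> l ! j \<in> set l"
proof -
  assume l: "l \<in> Ls k {..<n}" and j: "j < k"
  have len: "length l = k" and sl: "set l \<subseteq> {..<n}" using l by (auto simp: Ls_def)
  have "l ! j \<in> set l" using j len by (metis nth_mem)
  then show ?thesis using sl by auto
qed

lemma S_mem: "l \<in> Ls k {..<n} \<Longrightarrow> xs \<in> S l \<Longrightarrow> j < k \<Longrightarrow> xs (l ! j) \<in> band (l ! j) j"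
proof -
  assume l: "l \<in> Ls k {..<n}" and x: "xs \<in> S l" and j: "j < k"
  have len: "length l = k" and dl: "distinct l" using l by (auto simp: Ls_def)
  have "xs (l ! j) \<in> A l (l ! j)" using S_mem_gen[OF x] Ls_nth[OF l j] by simp
  then show ?thesis using Ls_nth[OF l j] idx_nth[OF dl, of j] j len by (simp add: A_def)
qed

lemma S_mem_rest: "xs \<in> S l \<Longrightarrow> u < n \<Longrightarrow> u \<notin> set l \<Longrightarrow> xs u \<in> Cs u"
  using S_mem_gen[of xs l u] by (simp add: A_def)

lemma S_disj:
  assumes l: "l \<in> Ls k {..<n}" and l': "l' \<in> Ls k {..<n}" and x: "xs \<in> S l" "xs \<in> S l'"
  shows "l = l'"
proof (rule nth_equalityI)
  show len: "length l = length l'" using l l' by (simp add: Ls_def)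
  fix j assume "j < length l"
  then have j: "j < k" using l by (simp add: Ls_def)
  let ?u = "l ! j"
  have b: "xs ?u \<in> band ?u j" by (rule S_mem[OF l x(1) j])
  have un: "?u < n" using Ls_nth[OF l j] by simp
  show "l ! j = l' ! j"
  proof (cases "?u \<in> set l'")
    case True
    then obtain i where i: "i < k" "l' ! i = ?u" using l' by (auto simp: Ls_def in_set_conv_nth)
    have b': "xs ?u \<in> band ?u i" using S_mem[OF l' x(2) i(1)] i(2) by simp
    have "i = j"
    proof (rule ccontr)
      assume "i \<noteq> j"
      then have "i < j \<or> j < i" by auto
      then show False using band_disj[of i j ?u] band_disj[of j i ?u] b b' by auto
    qed
    then show ?thesis using i by simp
  next
    case False
    then have "xs ?u \<in> Cs ?u" using S_mem_rest[OF x(2) un] by simp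
    then show ?thesis using band_E_k[OF j, of ?u] b unfolding Cs_def by auto
  qed
qed

lemma sum_ind:
  "(\<Sum>l\<in>Ls k {..<n}. indicator (S l) xs :: real) = (if \<exists>l\<in>Ls k {..<n}. xs \<in> S l then 1 else 0)"
proof (cases "\<exists>l\<in>Ls k {..<n}. xs \<in> S l")
  case True
  then obtain l0 where l0: "l0 \<in> Ls k {..<n}" "xs \<in> S l0" by auto
  have "(\<Sum>l\<in>Ls k {..<n}. indicator (S l) xs :: real) = (\<Sum>l\<in>Ls k {..<n}. if l = l0 then 1 else 0)"
    by (intro sum.cong refl) (use S_disj l0 in \<open>auto simp: indicator_def\<close>)
  also have "\<dots> = 1" using l0 finite_Ls[of "{..<n}" k] by simp
  finally show ?thesis using True by simp
next
  case False then show ?thesis by (auto simp: indicator_def intro!: sum.neutral)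
qed

lemma Rb_nonneg: "Rb xs \<ge> 0"
  unfolding Rb_def using tau_pos[of k] consts_pos(7)[OF d T]
  by (intro sum_nonneg add_nonneg_nonneg mult_nonneg_nonneg) auto

end


context LB begin

lemma Xw_dyadic:
  assumes v: "v < n" and G: "xs v \<in> Gd d" and le: "Yw d p (w v) c (xs v) \<le> \<sigma> k"
  shows "Xw xs v \<le> (\<Sum>i<n. \<tau> k * gam T ^ i * indicator (H v i) (xs v)) + \<tau> k * gam T ^ n"
proof -
  let ?y = "Yw d p (w v) c (xs v)"
  have y0: "?y \<ge> 0" using Yw_nonneg[OF v G] .
  have "Xw xs v \<le> (\<Sum>i<n. \<sigma> k powr (1/T) * ((1/2) powr (1/T)) ^ i * (if ?y > \<sigma> k / 2 ^ Suc i then 1 else 0))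
            + \<sigma> k powr (1/T) * ((1/2) powr (1/T)) ^ n"
    unfolding Xw_eq by (rule dyadic_bound[OF y0 le]) (use T in simp)
  also have "\<dots> = (\<Sum>i<n. \<tau> k * gam T ^ i * indicator (H v i) (xs v)) + \<tau> k * gam T ^ n"
    unfolding \<tau>_def gam_def H_def E_def Eset_def using G
    by (intro arg_cong2[where f="(+)"] sum.cong refl) (auto simp: indicator_def)
  finally show ?thesis .
qed

lemma F_le:
  assumes G: "\<And>u. u < n \<Longrightarrow> xs u \<in> Gd d"
  shows "F xs \<le> nice_prob_given d p T k n w xs c"
proof -
  let ?th = "thC d k T" and ?M = "MC d k T"
  have npg0: "0 \<le> nice_prob_given d p T k n w xs c" using nice_prob_given_bounds by blast
  have th: "?th > 0" "?M > 0" using consts_pos[OF d T] by auto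
  have tk: "\<tau> k > 0" by (rule tau_pos)
  have Rq: "Rb xs / (?M * \<tau> k) \<ge> 0" using Rb_nonneg th tk by simp
  show ?thesis
  proof (cases "\<exists>l\<in>Ls k {..<n}. xs \<in> S l")
    case False
    then have "F xs = ?th ^ k * (0 - Rb xs / (?M * \<tau> k))" unfolding F_def sum_ind by simp
    also have "\<dots> \<le> 0"
    proof -
      have "0 \<le> ?th ^ k * (Rb xs / (?M * \<tau> k))" by (intro mult_nonneg_nonneg) (use Rq th in auto)
      then show ?thesis by simp
    qed
    finally show ?thesis using npg0 by simp
  next
    case True
    then obtain l0 where l0: "l0 \<in> Ls k {..<n}" "xs \<in> S l0" by auto
    have Fe: "F xs = ?th ^ k * (1 - Rb xs / (?M * \<tau> k))" unfolding F_def sum_ind using True by simp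
    show ?thesis
    proof (cases "Rb xs \<ge> ?M * \<tau> k")
      case True
      then have "Rb xs / (?M * \<tau> k) \<ge> 1" using th tk by simp
      then have "F xs \<le> 0" unfolding Fe using th by (simp add: mult_nonneg_nonpos)
      then show ?thesis using npg0 by simp
    next
      case False
      have rest_le: "Yw d p (w v) c (xs v) \<le> \<sigma> k" if "v \<in> {..<n} - set l0" for v
      proof -
        have "xs v \<in> Cs v" using S_mem_rest[OF l0(2)] that by auto
        then show ?thesis unfolding Cs_def E_def Eset_def by auto
      qed
      have det: "nice_seq (Xw xs) {..<n} l0 \<and> seq_prob (Xw xs) {..<n} l0 \<ge> (1 / (1 + real k + ?M)) ^ k"
      proof (rule det_nice[OF _ _ l0(1)])
        show "finite {..<n}" by simp
        show "\<And>v. v \<in> {..<n} \<Longrightarrow> 0 \<le> Xw xs v" by (simp add: Xw_def conn_weight_nonneg)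
        show "0 \<le> ?M" using th by simp
        show "\<And>i j. i \<le> j \<Longrightarrow> j \<le> k \<Longrightarrow> \<tau> j \<le> \<tau> i"
          unfolding \<tau>_def using sigma_mono sigma_pos T by (intro powr_mono2) (auto intro: less_imp_le)
        show "0 \<le> \<tau> k" using tk by simp
      next
        fix j assume j: "j < k"
        have "xs (l0 ! j) \<in> band (l0 ! j) j" by (rule S_mem[OF l0 j])
        then have "Yw d p (w (l0 ! j)) c (xs (l0 ! j)) > \<sigma> (Suc j)"
          unfolding band_def E_def Eset_def by auto
        then show "\<tau> (Suc j) < Xw xs (l0 ! j)"
          unfolding \<tau>_def Xw_eq using sigma_pos[of "Suc j"] T by (intro powr_less_mono2) auto
      next
        fix j assume j: "j < k" and j0: "0 < j"
        have un: "l0 ! j < n" using Ls_nth[OF l0(1) j] by simp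
        have "xs (l0 ! j) \<in> band (l0 ! j) j" by (rule S_mem[OF l0 j])
        then have "Yw d p (w (l0 ! j)) c (xs (l0 ! j)) \<le> \<sigma> j" "xs (l0 ! j) \<in> Gd d"
          unfolding band_def E_def Eset_def using j0 by auto
        then show "Xw xs (l0 ! j) \<le> \<tau> j"
          unfolding \<tau>_def Xw_eq using Yw_nonneg[OF un] T by (intro powr_mono2) auto
      next
        fix v assume v: "v \<in> {..<n} - set l0"
        show "Xw xs v \<le> \<tau> k"
          unfolding \<tau>_def Xw_eq using rest_le[OF v] Yw_nonneg[of v] G[of v] v T by (intro powr_mono2) auto
      next
        have "(\<Sum>v\<in>{..<n} - set l0. Xw xs v)
            \<le> (\<Sum>v\<in>{..<n} - set l0. (\<Sum>i<n. \<tau> k * gam T ^ i * indicator (H v i) (xs v)) + \<tau> k * gam T ^ n)"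
          by (rule sum_mono) (use Xw_dyadic G rest_le in auto)
        also have "\<dots> \<le> Rb xs" unfolding Rb_def
          by (rule sum_mono2) (use tk consts_pos(7)[OF d T] in \<open>auto intro!: add_nonneg_nonneg sum_nonneg mult_nonneg_nonneg\<close>)
        also have "\<dots> \<le> ?M * \<tau> k" using False by simp
        finally show "(\<Sum>v\<in>{..<n} - set l0. Xw xs v) \<le> ?M * \<tau> k" .
      qed
      have "seq_prob (Xw xs) {..<n} l0 \<le> nice_prob_given d p T k n w xs c"
      proof -
        have "nice_prob_given d p T k n w xs c
            = (\<Sum>us\<in>Ls k {..<n}. if nice_seq (Xw xs) {..<n} us then seq_prob (Xw xs) {..<n} us else 0)"
          unfolding nice_prob_given_eq Xw_def ..
        moreover have "(if nice_seq (Xw xs) {..<n} l0 then seq_prob (Xw xs) {..<n} l0 else 0)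
            \<le> (\<Sum>us\<in>Ls k {..<n}. if nice_seq (Xw xs) {..<n} us then seq_prob (Xw xs) {..<n} us else 0)"
          by (rule member_le_sum) (auto simp: l0 finite_Ls intro!: seq_prob_nonneg simp: Xw_def conn_weight_nonneg)
        ultimately show ?thesis using det by simp
      qed
      moreover have "F xs \<le> ?th ^ k" unfolding Fe using Rq th by (simp add: mult_left_le)
      moreover have "?th ^ k = (1 / (1 + real k + ?M)) ^ k" unfolding thC_def ..
      ultimately show ?thesis using det by linarith
    qed
  qed
qed

end


context LB begin

lemma comp_PN[measurable]: "u < n \<Longrightarrow> (\<lambda>xs. xs u) \<in> measurable PN (torus d)"
  unfolding PN_def by (rule measurable_component_singleton) simp

lemma comp_PN_all: "(\<lambda>xs. xs v i) \<in> borel_measurable PN"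
proof (cases "v < n")
  case True
  then show ?thesis using measurable_compose[OF comp_PN component_torus_measurable] by blast
next
  case False
  have "(\<lambda>xs. undefined i) \<in> borel_measurable PN" by simp
  then show ?thesis
    by (rule measurable_cong[THEN iffD1, rotated]) (use False in \<open>auto simp: PN_def space_PiM PiE_def extensional_def\<close>)
qed

lemma npg_meas_PN: "(\<lambda>xs. nice_prob_given d p T k n w xs c) \<in> borel_measurable PN"
  using npg_measurable[of "\<lambda>_. c" PN "\<lambda>xs. xs" d p T k n w] comp_PN_all by simp

lemma H_sets: "H u i \<in> sets (torus d)" unfolding H_def by simp

lemma indH_meas: "u < n \<Longrightarrow> (\<lambda>xs. indicator (H u i) (xs u) :: real) \<in> borel_measurable PN"
  using measurable_compose[OF comp_PN borel_measurable_indicator[OF H_sets]] by blast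

lemma indH_int: "u < n \<Longrightarrow> integrable PN (\<lambda>xs. indicator (H u i) (xs u) :: real)"
proof (rule finite_measure.integrable_const_bound[OF prob_space.finite_measure[OF prob_PN], where B=1])
  assume u: "u < n"
  show "AE x in PN. norm (indicator (H u i) (x u) :: real) \<le> 1" by (simp add: indicator_def)
  show "(\<lambda>xs. indicator (H u i) (xs u) :: real) \<in> borel_measurable PN" by (rule indH_meas[OF u])
qed

lemma indH_integral: "u < n \<Longrightarrow> integral\<^sup>L PN (\<lambda>xs. indicator (H u i) (xs u) :: real) = measure (torus d) (H u i)"
proof -
  assume u: "u < n"
  have "integral\<^sup>L PN (\<lambda>xs. indicator (H u i) (xs u) :: real) = integral\<^sup>L (distr PN (torus d) (\<lambda>xs. xs u)) (indicator (H u i))"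
    by (rule integral_distr[symmetric]) (use u comp_PN H_sets in auto)
  also have "distr PN (torus d) (\<lambda>xs. xs u) = torus d"
    unfolding PN_def by (rule distr_PiM_component) (use u prob_torus in auto)
  finally show ?thesis using H_sets by simp
qed

lemma H_measure: "u < n \<Longrightarrow> measure (torus d) (H u i) \<le> w u * 2 ^ i / W"
proof -
  assume u: "u < n"
  have pos: "\<sigma> k / 2 ^ Suc i > 0" using sigma_pos[of k] by simp
  have "measure (torus d) (H u i) \<le> bC d * (w u / (\<sigma> k / 2 ^ Suc i))"
    unfolding H_def by (rule E_upper[OF u pos])
  also have "\<dots> = w u * 2 ^ i / W" unfolding sigma_k sC_def using consts_pos[OF d T] W_pos
    by (simp add: field_simps)
  finally show ?thesis .
qed

lemma Rb_term_int: "u < n \<Longrightarrow> integrable PN (\<lambda>xs. (\<Sum>i<n. \<tau> k * gam T ^ i * indicator (H u i) (xs u) :: real) + \<tau> k * gam T ^ n)"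
proof -
  assume u: "u < n"
  interpret PNp: prob_space PN by (rule prob_PN)
  show ?thesis
  proof (rule Bochner_Integration.integrable_add)
    show "integrable PN (\<lambda>xs. \<Sum>i<n. \<tau> k * gam T ^ i * indicator (H u i) (xs u) :: real)"
      by (rule Bochner_Integration.integrable_sum, rule Bochner_Integration.integrable_mult_right, rule indH_int[OF u])
  qed simp
qed

lemma Rb_term_integral: "u < n \<Longrightarrow> integral\<^sup>L PN (\<lambda>xs. (\<Sum>i<n. \<tau> k * gam T ^ i * indicator (H u i) (xs u) :: real) + \<tau> k * gam T ^ n)
   = (\<Sum>i<n. \<tau> k * gam T ^ i * measure (torus d) (H u i)) + \<tau> k * gam T ^ n"
proof -
  assume u: "u < n"
  interpret PNp: prob_space PN by (rule prob_PN)
  have i1: "integrable PN (\<lambda>xs. \<Sum>i<n. \<tau> k * gam T ^ i * indicator (H u i) (xs u) :: real)"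
    by (rule Bochner_Integration.integrable_sum, rule Bochner_Integration.integrable_mult_right, rule indH_int[OF u])
  have "integral\<^sup>L PN (\<lambda>xs. (\<Sum>i<n. \<tau> k * gam T ^ i * indicator (H u i) (xs u) :: real) + \<tau> k * gam T ^ n)
    = integral\<^sup>L PN (\<lambda>xs. \<Sum>i<n. \<tau> k * gam T ^ i * indicator (H u i) (xs u) :: real) + \<tau> k * gam T ^ n"
    using i1 by (subst Bochner_Integration.integral_add) (auto simp: PNp.prob_space)
  also have "integral\<^sup>L PN (\<lambda>xs. \<Sum>i<n. \<tau> k * gam T ^ i * indicator (H u i) (xs u) :: real)
     = (\<Sum>i<n. \<tau> k * gam T ^ i * measure (torus d) (H u i))"
    by (subst Bochner_Integration.integral_sum) (auto intro!: Bochner_Integration.integrable_mult_right indH_int[OF u] simp: indH_integral[OF u])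
  finally show ?thesis .
qed

lemma Rb_int: "integrable PN Rb"
  unfolding Rb_def[abs_def] by (rule Bochner_Integration.integrable_sum) (use Rb_term_int in auto)

lemma Rb_integral: "integral\<^sup>L PN Rb \<le> \<tau> k * B0 T"
proof -
  let ?g = "gam T"
  have g: "?g > 0" "2 * ?g < 1" using consts_pos[OF d T] by auto
  have "integral\<^sup>L PN Rb = (\<Sum>u<n. (\<Sum>i<n. \<tau> k * ?g ^ i * measure (torus d) (H u i)) + \<tau> k * ?g ^ n)"
    unfolding Rb_def[abs_def]
    by (subst Bochner_Integration.integral_sum) (use Rb_term_int Rb_term_integral in auto)
  also have "\<dots> \<le> (\<Sum>u<n. (\<Sum>i<n. \<tau> k * ?g ^ i * (w u * 2 ^ i / W)) + \<tau> k * ?g ^ n)"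
    by (intro sum_mono add_right_mono mult_left_mono H_measure) (use tau_pos[of k] g in auto)
  also have "\<dots> = \<tau> k * (\<Sum>i<n. (2 * ?g) ^ i) * ((\<Sum>u<n. w u) / W) + real n * (\<tau> k * ?g ^ n)"
  proof -
    have h1: "\<tau> k * ?g ^ i * (w u * 2 ^ i / W) = \<tau> k * (2 * ?g) ^ i * (w u / W)" for u i
      by (simp add: power_mult_distrib)
    have "(\<Sum>u<n. (\<Sum>i<n. \<tau> k * ?g ^ i * (w u * 2 ^ i / W)) + \<tau> k * ?g ^ n)
        = (\<Sum>u<n. \<Sum>i<n. \<tau> k * (2 * ?g) ^ i * (w u / W)) + real n * (\<tau> k * ?g ^ n)"
      by (simp only: h1 sum.distrib sum_constant of_nat_def[symmetric]) (simp add: of_nat_def)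
    also have "(\<Sum>u<n. \<Sum>i<n. \<tau> k * (2 * ?g) ^ i * (w u / W)) = (\<Sum>i<n. \<Sum>u<n. \<tau> k * (2 * ?g) ^ i * (w u / W))"
      by (rule sum.swap)
    also have "\<dots> = (\<Sum>i<n. \<tau> k * (2 * ?g) ^ i * ((\<Sum>u<n. w u) / W))"
      by (simp only: sum_distrib_left[symmetric] sum_divide_distrib[symmetric])
    also have "\<dots> = \<tau> k * (\<Sum>i<n. (2 * ?g) ^ i) * ((\<Sum>u<n. w u) / W)"
      by (simp only: sum_distrib_left[symmetric] sum_distrib_right[symmetric])
    finally show ?thesis .
  qed
  also have "(\<Sum>u<n. w u) / W = 1" using W_pos unfolding W_def by simp
  also have "(\<Sum>i<n. (2 * ?g) ^ i) \<le> 1 / (1 - 2 * ?g)"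
  proof -
    have "(\<Sum>i<n. (2 * ?g) ^ i) = (1 - (2 * ?g) ^ n) / (1 - 2 * ?g)" using g sum_gp_strict[of "2 * ?g" n] by (simp del: power_mult_distrib)
    also have "\<dots> \<le> 1 / (1 - 2 * ?g)" using g by (intro divide_right_mono) auto
    finally show ?thesis .
  qed
  also have "real n * (\<tau> k * ?g ^ n) \<le> \<tau> k"
  proof -
    have "?g ^ n \<le> (1/2) ^ n" using g by (intro power_mono) auto
    then have "real n * ?g ^ n \<le> real n * (1/2) ^ n" by (intro mult_left_mono) auto
    also have "\<dots> \<le> 1" using less_exp[of n] by (simp add: field_simps)
    finally have "real n * ?g ^ n \<le> 1" .
    then show ?thesis using tau_pos[of k] by (simp add: mult_left_le mult.left_commute)
  qed
  finally show ?thesis using tau_pos[of k] unfolding B0_def by (simp add: algebra_simps mult_left_mono)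
qed

end


context LB begin

lemma AE_Gd: "AE xs in PN. \<forall>u\<in>{..<n}. xs u \<in> Gd d"
proof (rule eventually_ball_finite)
  show "finite {..<n}" by simp
  show "\<forall>u\<in>{..<n}. AE xs in PN. xs u \<in> Gd d"
  proof
    fix u assume u: "u \<in> {..<n}"
    interpret D: prob_space "torus d" by (rule prob_torus)
    have "AE x in torus d. x \<in> Gd d"
      using D.AE_in_set_eq_1[OF Gd_sets] emeasure_Gd[of d] by (simp add: D.emeasure_eq_measure)
    then show "AE xs in PN. xs u \<in> Gd d"
      unfolding PN_def by (rule AE_PiM_component[rotated 2]; use u prob_torus in auto)
  qed
qed

lemma npg_int: "integrable PN (\<lambda>xs. nice_prob_given d p T k n w xs c)"
proof (rule finite_measure.integrable_const_bound[OF prob_space.finite_measure[OF prob_PN], where B=1])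
  show "AE x in PN. norm (nice_prob_given d p T k n w x c) \<le> 1"
    using nice_prob_given_bounds by (simp add: abs_le_iff)
  show "(\<lambda>xs. nice_prob_given d p T k n w xs c) \<in> borel_measurable PN" by (rule npg_meas_PN)
qed

lemma indS_int: "integrable PN (indicator (S l) :: _ \<Rightarrow> real)"
proof -
  interpret PNp: prob_space PN by (rule prob_PN)
  show ?thesis by (rule integrable_real_indicator) (auto simp: S_sets PNp.emeasure_finite less_top[symmetric])
qed

lemma ind_int: "integrable PN (\<lambda>xs. \<Sum>l\<in>Ls k {..<n}. indicator (S l) xs :: real)"
  by (rule Bochner_Integration.integrable_sum) (rule indS_int)

lemma inner_bound: "integral\<^sup>L PN (\<lambda>xs. nice_prob_given d p T k n w xs c) \<ge> c0 d k T"
proof -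
  interpret PNp: prob_space PN by (rule prob_PN)
  let ?th = "thC d k T" and ?M = "MC d k T"
  have pos: "?th > 0" "?M > 0" "A0 d k > 0" "B0 T > 0" using consts_pos[OF d T] by auto
  have tk: "\<tau> k > 0" by (rule tau_pos)
  have iR: "integrable PN (\<lambda>xs. Rb xs / (?M * \<tau> k))" using Rb_int by simp
  have iF: "integrable PN F" unfolding F_def[abs_def] using ind_int iR by simp
  have "integral\<^sup>L PN F \<le> integral\<^sup>L PN (\<lambda>xs. nice_prob_given d p T k n w xs c)"
    by (rule integral_mono_AE[OF iF npg_int]) (use AE_Gd in \<open>eventually_elim, auto intro: F_le\<close>)
  moreover have "integral\<^sup>L PN F = ?th ^ k * ((\<Sum>l\<in>Ls k {..<n}. measure PN (S l)) - integral\<^sup>L PN Rb / (?M * \<tau> k))"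
  proof -
    have "integral\<^sup>L PN F = ?th ^ k * integral\<^sup>L PN (\<lambda>xs. (\<Sum>l\<in>Ls k {..<n}. indicator (S l) xs) - Rb xs / (?M * \<tau> k))"
      unfolding F_def[abs_def] by simp
    also have "integral\<^sup>L PN (\<lambda>xs. (\<Sum>l\<in>Ls k {..<n}. indicator (S l) xs) - Rb xs / (?M * \<tau> k))
        = integral\<^sup>L PN (\<lambda>xs. \<Sum>l\<in>Ls k {..<n}. indicator (S l) xs :: real) - integral\<^sup>L PN Rb / (?M * \<tau> k)"
      using ind_int iR by simp
    also have "integral\<^sup>L PN (\<lambda>xs. \<Sum>l\<in>Ls k {..<n}. indicator (S l) xs :: real) = (\<Sum>l\<in>Ls k {..<n}. measure PN (S l))"
      by (subst Bochner_Integration.integral_sum) (auto simp: indS_int S_sets Int_absorb2 sets.sets_into_space)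
    finally show ?thesis .
  qed
  moreover have "integral\<^sup>L PN Rb / (?M * \<tau> k) \<le> B0 T / ?M"
  proof -
    have "integral\<^sup>L PN Rb / (?M * \<tau> k) \<le> (\<tau> k * B0 T) / (?M * \<tau> k)"
      using Rb_integral pos tk by (intro divide_right_mono) auto
    also have "\<dots> = B0 T / ?M" using tk by simp
    finally show ?thesis .
  qed
  moreover have "B0 T / ?M = A0 d k / 2" unfolding MC_def using pos by (simp add: field_simps)
  ultimately have "integral\<^sup>L PN (\<lambda>xs. nice_prob_given d p T k n w xs c) \<ge> ?th ^ k * (A0 d k - A0 d k / 2)"
    using sum_S_lower pos by (smt (verit, ccfv_SIG) mult_left_mono zero_le_power)
  then show ?thesis unfolding c0_def by simp
qed

end


lemma PN_comp_meas: "(\<lambda>xs. xs v i) \<in> borel_measurable (PiM {..<n} (\<lambda>_. torus d))"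
proof (cases "v < n")
  case True
  have "(\<lambda>xs. xs v) \<in> measurable (PiM {..<n} (\<lambda>_. torus d)) (torus d)"
    by (rule measurable_component_singleton) (use True in simp)
  then show ?thesis using measurable_compose[OF _ component_torus_measurable] by blast
next
  case False
  have "(\<lambda>xs. undefined i) \<in> borel_measurable (PiM {..<n} (\<lambda>_. torus d))" by simp
  then show ?thesis
    by (rule measurable_cong[THEN iffD1, rotated]) (use False in \<open>auto simp: space_PiM PiE_def extensional_def\<close>)
qed

lemma fub:
  fixes M1 :: "'a measure" and g :: "'a \<Rightarrow> nat \<Rightarrow> real"
  assumes M1: "prob_space M1" and g: "g \<in> measurable M1 (torus d)" and ae: "AE x in M1. g x \<in> Gd d"
    and d: "d \<ge> 1" and p: "p \<ge> 1" and T: "0 < T" "T < 1" and w: "\<And>v. v < n \<Longrightarrow> w v \<ge> 1" and n: "n \<ge> 1"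
    and small: "Max (w ` {..<n}) / (\<Sum>v<n. w v) \<le> del0 d k"
  shows "c0 d k T \<le> (\<integral>z. nice_prob_given d p T k n w (snd z) (g (fst z)) \<partial>(M1 \<Otimes>\<^sub>M PiM {..<n} (\<lambda>_. torus d)))"
    and "(\<integral>z. nice_prob_given d p T k n w (snd z) (g (fst z)) \<partial>(M1 \<Otimes>\<^sub>M PiM {..<n} (\<lambda>_. torus d))) \<le> 1"
    and "integrable (M1 \<Otimes>\<^sub>M PiM {..<n} (\<lambda>_. torus d)) (\<lambda>z. nice_prob_given d p T k n w (snd z) (g (fst z)))"
proof -
  let ?PN = "PiM {..<n} (\<lambda>_. torus d)"
  let ?f = "\<lambda>z. nice_prob_given d p T k n w (snd z) (g (fst z))"
  interpret M1: prob_space M1 by (rule M1)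
  have PNp: "prob_space ?PN" by (rule prob_space_PiM) (rule prob_torus)
  interpret PN: prob_space ?PN by (rule PNp)
  interpret PS: pair_sigma_finite M1 ?PN
    by (simp add: pair_sigma_finite_def prob_space_imp_sigma_finite M1 PNp)
  have PP: "prob_space (M1 \<Otimes>\<^sub>M ?PN)" by (rule prob_space_pair[OF M1 PNp])
  interpret PP: prob_space "M1 \<Otimes>\<^sub>M ?PN" by (rule PP)
  have gm: "\<And>i. (\<lambda>x. g x i) \<in> borel_measurable M1"
    using measurable_compose[OF g component_torus_measurable] by blast
  have fm: "?f \<in> borel_measurable (M1 \<Otimes>\<^sub>M ?PN)"
  proof (rule npg_measurable)
    fix i show "(\<lambda>z. g (fst z) i) \<in> borel_measurable (M1 \<Otimes>\<^sub>M ?PN)"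
    proof -
      have "(\<lambda>z. fst z) \<in> measurable (M1 \<Otimes>\<^sub>M ?PN) M1" by simp
      from measurable_compose[OF this gm[of i]] show ?thesis by simp
    qed
  next
    fix v i show "(\<lambda>z. snd z v i) \<in> borel_measurable (M1 \<Otimes>\<^sub>M ?PN)"
    proof -
      have "(\<lambda>z. snd z) \<in> measurable (M1 \<Otimes>\<^sub>M ?PN) ?PN" by simp
      from measurable_compose[OF this PN_comp_meas[of v i n d]] show ?thesis by simp
    qed
  qed
  have bnd: "\<And>z. 0 \<le> ?f z \<and> ?f z \<le> 1" using nice_prob_given_bounds by blast
  have fi: "integrable (M1 \<Otimes>\<^sub>M ?PN) ?f"
    by (rule PP.integrable_const_bound[where B=1]) (use bnd fm in \<open>auto simp: abs_le_iff\<close>)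
  show "integrable (M1 \<Otimes>\<^sub>M ?PN) ?f" by (rule fi)
  show "(\<integral>z. ?f z \<partial>(M1 \<Otimes>\<^sub>M ?PN)) \<le> 1"
  proof -
    have "(\<integral>z. ?f z \<partial>(M1 \<Otimes>\<^sub>M ?PN)) \<le> (\<integral>z. 1 \<partial>(M1 \<Otimes>\<^sub>M ?PN))"
      by (rule integral_mono[OF fi]) (use bnd in auto)
    then show ?thesis by (simp add: PP.prob_space)
  qed
  have eq: "(\<integral>x. (\<integral>y. ?f (x, y) \<partial>?PN) \<partial>M1) = (\<integral>z. ?f z \<partial>(M1 \<Otimes>\<^sub>M ?PN))"
    by (rule PS.integral_fst'[OF fi])
  have hi: "integrable M1 (\<lambda>x. \<integral>y. ?f (x, y) \<partial>?PN)" by (rule PS.integrable_fst'[OF fi])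
  have "AE x in M1. c0 d k T \<le> (\<integral>y. ?f (x, y) \<partial>?PN)"
    using ae
  proof eventually_elim
    case (elim x)
    have cg: "\<forall>i<d. g x i \<in> {0..1}" using elim by (auto simp: Gd_def PiE_iff)
    interpret L: LB d p T k n w "g x"
      by unfold_locales (use d p T cg w n small in auto)
    show ?case using L.inner_bound unfolding L.PN_def by simp
  qed
  then have "(\<integral>x. c0 d k T \<partial>M1) \<le> (\<integral>x. (\<integral>y. ?f (x, y) \<partial>?PN) \<partial>M1)"
    by (intro integral_mono_AE[OF _ hi]) auto
  then show "c0 d k T \<le> (\<integral>z. ?f z \<partial>(M1 \<Otimes>\<^sub>M ?PN))"
    using eq by (simp add: M1.prob_space)
qed

lemma AE_Gd_torus: "AE x in torus d. x \<in> Gd d"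
proof -
  interpret D: prob_space "torus d" by (rule prob_torus)
  show ?thesis using D.AE_in_set_eq_1[OF Gd_sets] emeasure_Gd[of d] by (simp add: D.emeasure_eq_measure)
qed

theorem mainTheorem10:
  fixes d k :: nat and p :: enat and T :: real
    and w :: "nat \<Rightarrow> nat \<Rightarrow> real" and m :: "nat \<Rightarrow> nat"
  assumes d: "d \<ge> 1"
    and p: "p \<ge> 1"
    and T: "0 < T" "T < 1"
    and w_ge: "\<And>n v. v < n \<Longrightarrow> w n v \<ge> 1"
    and w_min: "\<And>n. n \<ge> 1 \<Longrightarrow> (\<exists>v<n. w n v = 1)"
    and w_max: "(\<lambda>n. Max ((w n) ` {..<n}) / (\<Sum>v<n. w n v)) \<longlonglongrightarrow> 0"
  shows "(\<exists>c>0. \<forall>\<^sub>F n in sequentially. clause_nice_prob d p T k n (w n) \<ge> c)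
       \<and> (\<exists>c>0. \<exists>C>0. \<forall>\<^sub>F n in sequentially.
            c * real (m n) \<le> expected_nice d p T k n (m n) (w n)
          \<and> expected_nice d p T k n (m n) (w n) \<le> C * real (m n))"
proof -
  have c0p: "c0 d k T > 0" and dp: "del0 d k > 0" using consts_pos[OF d T] by auto
  have ev: "\<forall>\<^sub>F n in sequentially. n \<ge> 1 \<and> Max ((w n) ` {..<n}) / (\<Sum>v<n. w n v) \<le> del0 d k"
  proof -
    have "\<forall>\<^sub>F n in sequentially. Max ((w n) ` {..<n}) / (\<Sum>v<n. w n v) < del0 d k"
      using order_tendstoD(2)[OF w_max dp] .
    moreover have "\<forall>\<^sub>F n in sequentially. n \<ge> 1" by (rule eventually_ge_at_top)
    ultimately show ?thesis by eventually_elim auto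
  qed
  have cl: "clause_nice_prob d p T k n (w n) \<ge> c0 d k T"
    if n: "n \<ge> 1" and sm: "Max ((w n) ` {..<n}) / (\<Sum>v<n. w n v) \<le> del0 d k" for n
  proof -
    have "c0 d k T \<le> (\<integral>z. nice_prob_given d p T k n (w n) (snd z) ((\<lambda>x. x) (fst z)) \<partial>(torus d \<Otimes>\<^sub>M PiM {..<n} (\<lambda>_. torus d)))"
      by (rule fub(1)[OF prob_torus _ AE_Gd_torus d p T _ n sm]) (use w_ge in auto)
    then show ?thesis unfolding clause_nice_prob_def by simp
  qed
  have ex: "real (m n) * c0 d k T \<le> expected_nice d p T k n (m n) (w n) \<and> expected_nice d p T k n (m n) (w n) \<le> real (m n)"
    if n: "n \<ge> 1" and sm: "Max ((w n) ` {..<n}) / (\<Sum>v<n. w n v) \<le> del0 d k" for n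
  proof -
    let ?M1 = "PiM {..<m n} (\<lambda>_. torus d)"
    let ?PN = "PiM {..<n} (\<lambda>_. torus d)"
    have M1: "prob_space ?M1" by (rule prob_space_PiM) (rule prob_torus)
    have facts: "c0 d k T \<le> (\<integral>z. nice_prob_given d p T k n (w n) (snd z) (fst z j) \<partial>(?M1 \<Otimes>\<^sub>M ?PN))
      \<and> (\<integral>z. nice_prob_given d p T k n (w n) (snd z) (fst z j) \<partial>(?M1 \<Otimes>\<^sub>M ?PN)) \<le> 1
      \<and> integrable (?M1 \<Otimes>\<^sub>M ?PN) (\<lambda>z. nice_prob_given d p T k n (w n) (snd z) (fst z j))"
      if j: "j < m n" for j
    proof -
      have g: "(\<lambda>cs. cs j) \<in> measurable ?M1 (torus d)"
        by (rule measurable_component_singleton) (use j in simp)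
      have ae: "AE cs in ?M1. cs j \<in> Gd d"
        by (rule AE_PiM_component[rotated 2]; use j prob_torus AE_Gd_torus in auto)
      have wn: "\<And>v. v < n \<Longrightarrow> w n v \<ge> 1" using w_ge by simp
      note F = fub[OF M1 g ae d p T wn n sm]
      show ?thesis using F by simp
    qed
    have "expected_nice d p T k n (m n) (w n) = (\<Sum>j<m n. \<integral>z. nice_prob_given d p T k n (w n) (snd z) (fst z j) \<partial>(?M1 \<Otimes>\<^sub>M ?PN))"
      unfolding expected_nice_def by (rule Bochner_Integration.integral_sum) (use facts in auto)
    moreover have "(\<Sum>j<m n. \<integral>z. nice_prob_given d p T k n (w n) (snd z) (fst z j) \<partial>(?M1 \<Otimes>\<^sub>M ?PN)) \<ge> (\<Sum>j<m n. c0 d k T)"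
      by (rule sum_mono) (use facts in auto)
    moreover have "(\<Sum>j<m n. \<integral>z. nice_prob_given d p T k n (w n) (snd z) (fst z j) \<partial>(?M1 \<Otimes>\<^sub>M ?PN)) \<le> (\<Sum>j<m n. 1)"
      by (rule sum_mono) (use facts in auto)
    ultimately show ?thesis by simp
  qed
  have A: "\<forall>\<^sub>F n in sequentially. c0 d k T \<le> clause_nice_prob d p T k n (w n)"
    using ev by eventually_elim (use cl in auto)
  have B: "\<forall>\<^sub>F n in sequentially. c0 d k T * real (m n) \<le> expected_nice d p T k n (m n) (w n)
          \<and> expected_nice d p T k n (m n) (w n) \<le> 1 * real (m n)"
    using ev by eventually_elim (use ex in \<open>auto simp: mult.commute\<close>)
  have "\<exists>c>0. \<forall>\<^sub>F n in sequentially. clause_nice_prob d p T k n (w n) \<ge> c"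
    using A c0p by blast
  moreover have "\<exists>c>0. \<exists>C>0. \<forall>\<^sub>F n in sequentially.
            c * real (m n) \<le> expected_nice d p T k n (m n) (w n)
          \<and> expected_nice d p T k n (m n) (w n) \<le> C * real (m n)"
    using B c0p zero_less_one by blast
  ultimately show ?thesis by blast
qed


end
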